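(* Let $1\le p<\infty$. Let $\Pi=(t_k)_{k\in\mathbb{Z}}$ be a sampling sequence with constants $0<\delta\le\Delta$, and let $\chi$ be a kernel satisfying $(\chi1)$–$(\chi4)$, where $(\chi3)$ holds with $\psi(u)=u$, i.e. $|\chi(x,u)-\chi(x,v)|\le L(x)|u-v|$, with $L$ satisfying $(L1)$, $(L2)$ and $M_p(L):=\int_{\mathbb{R}}L(u)|u|^p\,du<+\infty$. Let $M_2,\theta_0>0$ be such that $\mathcal{T}_w(x)\le M_2w^{-\theta_0}$ for all $x$ and all sufficiently large $w$. Let $0<\alpha\le1$ and $f\in Lip(\alpha,p)$ with constant $C_1>0$. Then for every sufficiently large $w>0$, $$\|S_wf-f\|_p\le\delta^{-1/p}[2m_{0,\Pi}(L)]^{(p-1)/p}\left[\|L\|_1+M_p(L)\right]^{1/p}C_1\frac{1}{w^{\alpha}}+\delta^{-1/p}m_{0,\Pi}(L)C_1\Delta^{1/p}\left(\frac{\Delta}{w}\right)^{\alpha}+M_2\|f\|_p\,w^{-\theta_0}.$$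
   Context: A $\varphi$-function is a continuous non-decreasing $\varphi:[0,\infty)\to[0,\infty)$ with $\varphi(0)=0$, $\varphi(u)>0$ for $u>0$, $\varphi(u)\to\infty$. A sampling sequence $\Pi=(t_k)$: strictly increasing reals, $t_k\to\pm\infty$, with $\delta\le\Delta_k:=t_{k+1}-t_k\le\Delta$. A kernel is $\chi:\mathbb{R}^2\to\mathbb{R}$ with: $(\chi1)$ $k\mapsto\chi(wx-t_k,u)\in\ell^1(\mathbb{Z})$ for all $x,u$, $w>0$; $(\chi2)$ $\chi(x,0)=0$; $(\chi3)$ measurable $L:\mathbb{R}\to[0,\infty)$ and a $\varphi$-function $\psi$ with $|\chi(x,u)-\chi(x,v)|\le L(x)\psi(|u-v|)$; $(\chi4)$ some $\theta_0>0$ with $\mathcal{T}_w(x):=\sup_{u\ne0}\left|\frac1u\sum_k\chi(wx-t_k,u)-1\right|=\mathcal{O}(w^{-\theta_0})$ uniformly in $x$. $(L1)$: $L\in L^1$, bounded near $0$; $(L2)$: some $\beta_0>0$ with $\sup_u\sum_kL(u-t_k)|u-t_k|^{\beta_0}<\infty$. $m_{0,\Pi}(L):=\sup_u\sum_kL(u-t_k)$. Operators: $(S_wf)(x):=\sum_k\chi\!\left(wx-t_k,\frac{w}{\Delta_k}\int_{t_k/w}^{t_{k+1}/w}f(u)\,du\right)$. $\omega_p(f,\delta'):=\sup_{|h|\le\delta'}\|f(\cdot+h)-f(\cdot)\|_p$. $Lip(\alpha,p)$ is the class of $f\in L^p(\mathbb{R})$ for which there is a constant $C_1>0$ with $\omega_p(f,\delta')\le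 C_1(\delta')^{\alpha}$ for all sufficiently small $\delta'>0$. *)

theory Defs
  imports "HOL-Analysis.Analysis"
begin

definition Lp_norm :: "real \<Rightarrow> (real \<Rightarrow> real) \<Rightarrow> ennreal" where
  "Lp_norm p g =
     (let I = (\<integral>\<^sup>+ x. ennreal (\<bar>g x\<bar> powr p) \<partial>lborel)
      in if I = \<infinity> then \<infinity> else ennreal (enn2real I powr (1 / p)))"

definition omega_p :: "real \<Rightarrow> (real \<Rightarrow> real) \<Rightarrow> real \<Rightarrow> ennreal" where
  "omega_p p f d = (SUP h \<in> {h. \<bar>h\<bar> \<le> d}. Lp_norm p (\<lambda>x. f (x + h) - f x))"

definition in_Lp :: "real \<Rightarrow> (real \<Rightarrow> real) \<Rightarrow> bool" where
  "in_Lp p f \<longleftrightarrow> f \<in> borel_measurable lborel \<and> integrable lborel (\<lambda>x. \<bar>f x\<bar> powr p)"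

definition Lip_with :: "real \<Rightarrow> real \<Rightarrow> real \<Rightarrow> (real \<Rightarrow> real) \<Rightarrow> bool" where
  "Lip_with \<alpha> p C1 f \<longleftrightarrow> in_Lp p f \<and>
     (\<exists>\<epsilon>>0. \<forall>d. 0 < d \<and> d < \<epsilon> \<longrightarrow> omega_p p f d \<le> ennreal (C1 * d powr \<alpha>))"

definition sampling_seq :: "(int \<Rightarrow> real) \<Rightarrow> real \<Rightarrow> real \<Rightarrow> bool" where
  "sampling_seq t \<delta> \<Delta> \<longleftrightarrow> 0 < \<delta> \<and> strict_mono t \<and>
     filterlim t at_top at_top \<and> filterlim t at_bot at_bot \<and>
     (\<forall>k. \<delta> \<le> t (k + 1) - t k \<and> t (k + 1) - t k \<le> \<Delta>)"

definition T_w :: "(real \<Rightarrow> real \<Rightarrow> real) \<Rightarrow> (int \<Rightarrow> real) \<Rightarrow> real \<Rightarrow> real \<Rightarrow> ennreal" where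
  "T_w K t w x = (SUP u \<in> UNIV - {0}. ennreal (abs ((1 / u) * (\<Sum>\<^sub>\<infinity>k. K (w * x - t k) u) - 1)))"

definition m0 :: "(int \<Rightarrow> real) \<Rightarrow> (real \<Rightarrow> real) \<Rightarrow> real" where
  "m0 t L = (SUP u. \<Sum>\<^sub>\<infinity>k. L (u - t k))"

definition S_w :: "(real \<Rightarrow> real \<Rightarrow> real) \<Rightarrow> (int \<Rightarrow> real) \<Rightarrow> real \<Rightarrow> (real \<Rightarrow> real) \<Rightarrow> real \<Rightarrow> real" where
  "S_w K t w f x = (\<Sum>\<^sub>\<infinity>k. K (w * x - t k)
      ((w / (t (k + 1) - t k)) * (LINT u:{t k / w .. t (k + 1) / w}|lborel. f u)))"

end

theory Submission
  imports Defs
begin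

definition epow :: "real \<Rightarrow> ennreal \<Rightarrow> ennreal" where
  "epow p x = (if x = top then top else ennreal (enn2real x powr p))"

lemma epow_ennreal: "0 \<le> x \<Longrightarrow> epow p (ennreal x) = ennreal (x powr p)"
  by (simp add: epow_def)

lemma epow_top[simp]: "epow p top = top"
  by (simp add: epow_def)

lemma epow_0[simp]: "epow p 0 = 0"
  by (simp add: epow_def)

lemma epow_mono:
  assumes "0 \<le> p" "a \<le> b" shows "epow p a \<le> epow p b"
proof (cases "b = top")
  case False
  then have "a \<noteq> top" using assms(2) top.extremum_unique by blast
  then show ?thesis using False assms
    by (auto simp: epow_def less_top intro!: ennreal_leI powr_mono2 enn2real_mono)
qed simp

lemma measurable_epow[measurable]:
  assumes [measurable]: "g \<in> borel_measurable M"
  shows "(\<lambda>x. epow p (g x)) \<in> borel_measurable M"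
  unfolding epow_def by measurable

lemma epow_mult:
  assumes "0 < p" shows "epow p (a * b) = epow p a * epow p b"
proof -
  consider "a = 0" | "b = 0" | "a = top" "b \<noteq> 0" | "b = top" "a \<noteq> 0" | "a \<noteq> top" "b \<noteq> top" "a \<noteq> 0" "b \<noteq> 0"
    by blast
  then show ?thesis
  proof cases
    case 3
    then have "epow p b \<noteq> 0" using assms
      by (cases "b = top") (auto simp: epow_def enn2real_eq_0_iff)
    then show ?thesis using 3 by (simp add: ennreal_mult_top ennreal_top_mult)
  next
    case 4
    then have "epow p a \<noteq> 0" using assms
      by (cases "a = top") (auto simp: epow_def enn2real_eq_0_iff)
    then show ?thesis using 4 by (simp add: ennreal_mult_top ennreal_top_mult)
  next
    case 5
    then obtain x y where "a = ennreal x" "b = ennreal y" "0 \<le> x" "0 \<le> y"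
      by (metis ennreal_cases)
    moreover have "ennreal x * ennreal y = ennreal (x * y)"
      using \<open>0 \<le> x\<close> \<open>0 \<le> y\<close> by (simp add: ennreal_mult)
    moreover have "ennreal (x powr p) * ennreal (y powr p) = ennreal ((x * y) powr p)"
      using \<open>0 \<le> x\<close> \<open>0 \<le> y\<close> by (simp add: ennreal_mult powr_mult)
    ultimately show ?thesis
      by (simp add: epow_ennreal)
  qed simp_all
qed

lemma epow_eq_0_iff: "0 < p \<Longrightarrow> epow p x = 0 \<longleftrightarrow> x = 0"
  by (cases x rule: ennreal_cases) (auto simp: epow_def)

lemma young_real:
  fixes p t m :: real
  assumes p: "1 \<le> p" and t: "0 \<le> t" and m: "0 \<le> m"
  shows "p * m powr (p - 1) * t \<le> t powr p + (p - 1) * m powr p"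
proof (cases "p = 1")
  case True
  then show ?thesis using t by (auto simp: powr_def)
next
  case False
  then have p1: "p > 1" using p by simp
  show ?thesis
  proof (cases "t = 0 \<or> m = 0")
    case True then show ?thesis using p1 t m by auto
  next
    case False
    then have tp: "t > 0" and mp: "m > 0" using t m by auto
    define q where "q = p / (p - 1)"
    have q1: "q > 1" using p1 by (simp add: q_def)
    have pq: "1/p + 1/q = 1" using p1 by (simp add: q_def field_simps)
    have "t * m powr (p - 1) \<le> t powr p / p + (m powr (p - 1)) powr q / q"
      using Youngs_inequality[OF p1 q1 pq t] by simp
    also have "(m powr (p - 1)) powr q = m powr p"
      using p1 by (simp add: powr_powr q_def)
    finally have "t * m powr (p - 1) \<le> t powr p / p + m powr p / q" .
    then have "p * (t * m powr (p - 1)) \<le> p * (t powr p / p + m powr p / q)"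
      using p1 by (intro mult_left_mono) auto
    also have "\<dots> = t powr p + (p - 1) * m powr p"
      using p1 by (simp add: q_def field_simps)
    finally show ?thesis by (simp add: mult_ac)
  qed
qed

lemma powr_pm1_mult:
  fixes m p :: real assumes "0 \<le> m" shows "m powr (p - 1) * m = m powr p"
proof (cases "m = 0")
  case False then show ?thesis using assms
    using powr_add[of m "p - 1" 1] by simp
qed simp

lemma le_one_plus_epow:
  assumes "1 \<le> p" shows "x \<le> 1 + epow p x"
proof (cases x rule: ennreal_cases)
  case (real r)
  have "r \<le> 1 + r powr p"
  proof (cases "r \<le> 1")
    case True then show ?thesis using real by (smt (verit) powr_ge_zero)
  next
    case False
    then have "r powr 1 \<le> r powr p" using assms by (intro powr_mono) auto
    then show ?thesis using False by simp
  qed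
  then have "ennreal r \<le> ennreal (1 + r powr p)" by (rule ennreal_leI)
  also have "\<dots> = 1 + epow p (ennreal r)" using real by (simp add: ennreal_plus epow_ennreal)
  finally show ?thesis using real by simp
qed simp

lemma jensen_nn:
  fixes g :: "'a \<Rightarrow> ennreal"
  assumes p: "1 \<le> p" and g[measurable]: "g \<in> borel_measurable M"
  shows "epow p (\<integral>\<^sup>+x. g x \<partial>M) \<le> epow (p - 1) (emeasure M (space M)) * (\<integral>\<^sup>+x. epow p (g x) \<partial>M)"
proof -
  define \<mu> where "\<mu> = emeasure M (space M)"
  define G where "G = (\<integral>\<^sup>+x. g x \<partial>M)"
  define I where "I = (\<integral>\<^sup>+x. epow p (g x) \<partial>M)"
  have "epow p G \<le> epow (p - 1) \<mu> * I"
  proof (cases "G = 0")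
    case True then show ?thesis by simp
  next
    case G0: False
    have "I \<noteq> 0"
    proof
      assume "I = 0"
      then have "AE x in M. epow p (g x) = 0" unfolding I_def by (simp add: nn_integral_0_iff_AE)
      then have "AE x in M. g x = 0" using p by (auto simp: epow_eq_0_iff elim!: AE_mp)
      then have "G = 0" unfolding G_def by (simp add: nn_integral_0_iff_AE)
      with G0 show False by simp
    qed
    have "\<mu> \<noteq> 0"
    proof
      assume "\<mu> = 0"
      have "G \<le> (\<integral>\<^sup>+x. top \<partial>M)" unfolding G_def by (intro nn_integral_mono) simp
      also have "\<dots> = 0" using \<open>\<mu> = 0\<close> by (simp add: \<mu>_def)
      finally show False using G0 by simp
    qed
    show ?thesis
    proof (cases "\<mu> = top")
      case True
      then show ?thesis using \<open>I \<noteq> 0\<close> by (simp add: epow_def ennreal_top_mult)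
    next
      case mu_fin: False
      then obtain mr where mr: "\<mu> = ennreal mr" "mr > 0" using \<open>\<mu> \<noteq> 0\<close>
        by (cases \<mu> rule: ennreal_cases) auto
      have epm: "epow (p - 1) \<mu> = ennreal (mr powr (p-1))" using mr by (simp add: epow_ennreal)
      show ?thesis
      proof (cases "I = top")
        case True
        moreover have "mr powr (p-1) > 0" using mr by simp
        ultimately show ?thesis using epm by (simp add: ennreal_mult_top)
      next
        case I_fin: False
        then obtain ir where ir: "I = ennreal ir" "ir \<ge> 0" by (cases I rule: ennreal_cases) auto
        have "G \<le> (\<integral>\<^sup>+x. 1 + epow p (g x) \<partial>M)" unfolding G_def
          using p by (intro nn_integral_mono le_one_plus_epow)
        also have "\<dots> = \<mu> + I" unfolding \<mu>_def I_def by (simp add: nn_integral_add)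
        also have "\<dots> = ennreal (mr + ir)" using mr ir by (simp add: ennreal_plus)
        finally have "G < top" using le_less_trans by fastforce
        then obtain gr where gr: "G = ennreal gr" "gr > 0" using G0
          by (cases G rule: ennreal_cases) auto
        define m where "m = gr / mr"
        have m0: "m \<ge> 0" using gr mr by (simp add: m_def)
        have pw: "ennreal (p * m powr (p-1)) * g x \<le> epow p (g x) + ennreal ((p-1) * m powr p)" for x
        proof (cases "g x" rule: ennreal_cases)
          case (real y)
          have "ennreal (p * m powr (p-1)) * g x = ennreal (p * m powr (p-1) * y)"
            using real p by (simp add: ennreal_mult)
          also have "\<dots> \<le> ennreal (y powr p + (p-1) * m powr p)"
            using young_real[OF p \<open>0 \<le> y\<close> m0] by (rule ennreal_leI)
          also have "\<dots> = epow p (g x) + ennreal ((p-1) * m powr p)"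
            using real p by (simp add: epow_ennreal ennreal_plus)
          finally show ?thesis .
        next
          case top
          then show ?thesis by simp
        qed
        have "ennreal (p * m powr (p-1)) * G = (\<integral>\<^sup>+x. ennreal (p * m powr (p-1)) * g x \<partial>M)"
          unfolding G_def by (simp add: nn_integral_cmult)
        also have "\<dots> \<le> (\<integral>\<^sup>+x. epow p (g x) + ennreal ((p-1) * m powr p) \<partial>M)"
          by (intro nn_integral_mono pw)
        also have "\<dots> = I + ennreal ((p-1) * m powr p) * \<mu>"
          unfolding I_def \<mu>_def by (simp add: nn_integral_add)
        finally have "ennreal (p * m powr (p-1)) * G \<le> I + ennreal ((p-1) * m powr p) * \<mu>" .
        moreover have "ennreal (p * m powr (p-1)) * G = ennreal (p * m powr (p-1) * gr)"
          using gr p by (simp add: ennreal_mult)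
        moreover have "I + ennreal ((p-1) * m powr p) * \<mu> = ennreal (ir + (p-1) * m powr p * mr)"
          using ir mr p by (simp add: ennreal_mult ennreal_plus)
        ultimately have "ennreal (p * m powr (p-1) * gr) \<le> ennreal (ir + (p-1) * m powr p * mr)"
          by metis
        then have "p * m powr (p-1) * gr \<le> ir + (p-1) * m powr p * mr"
          using ir mr p m0 by (subst (asm) ennreal_le_iff) auto
        moreover have "gr = m * mr" using mr by (simp add: m_def)
        ultimately have "p * (m powr (p-1) * m) * mr \<le> ir + (p-1) * m powr p * mr"
          by (simp add: mult_ac)
        then have "p * m powr p * mr \<le> ir + (p-1) * m powr p * mr"
          using powr_pm1_mult[OF m0, of p] by simp
        then have key: "m powr p * mr \<le> ir" by (simp add: algebra_simps)
        have "gr powr p = m powr p * mr * mr powr (p-1)"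
          using \<open>gr = m*mr\<close> m0 mr powr_pm1_mult[of mr p]
          by (simp add: powr_mult mult_ac)
        also have "\<dots> \<le> ir * mr powr (p-1)" using key by (intro mult_right_mono) auto
        finally have "gr powr p \<le> ir * mr powr (p-1)" .
        then have "ennreal (gr powr p) \<le> ennreal (mr powr (p-1) * ir)"
          by (intro ennreal_leI) (simp add: mult_ac)
        then show ?thesis using gr mr ir epm
          by (simp add: epow_ennreal ennreal_mult)
      qed
    qed
  qed
  then show ?thesis unfolding \<mu>_def G_def I_def .
qed

lemma conv3:
  fixes p :: real
  assumes p: "1 \<le> p" and th: "0 \<le> a1" "0 \<le> a2" "0 \<le> a3" "a1 + a2 + a3 = 1"
    and x: "0 \<le> x1" "0 \<le> x2" "0 \<le> x3"
  shows "(a1*x1 + a2*x2 + a3*x3) powr p \<le> a1 * x1 powr p + a2 * x2 powr p + a3 * x3 powr p"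
proof -
  define m where "m = a1*x1 + a2*x2 + a3*x3"
  have m0: "0 \<le> m" using th x by (simp add: m_def)
  have y: "a * (p * m powr (p-1) * x) \<le> a * (x powr p + (p-1) * m powr p)" if "0 \<le> a" "0 \<le> x" for a x
    using young_real[OF p that(2) m0] that(1) by (rule mult_left_mono)
  have "p * m powr (p-1) * m = a1 * (p * m powr (p-1) * x1) + a2 * (p * m powr (p-1) * x2)
      + a3 * (p * m powr (p-1) * x3)"
    by (simp add: m_def algebra_simps)
  also have "\<dots> \<le> a1 * (x1 powr p + (p-1) * m powr p) + a2 * (x2 powr p + (p-1) * m powr p)
      + a3 * (x3 powr p + (p-1) * m powr p)"
    using y th x by (intro add_mono) auto
  also have "\<dots> = (a1 * x1 powr p + a2 * x2 powr p + a3 * x3 powr p) + (p-1) * m powr p * (a1+a2+a3)"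
    by (simp add: algebra_simps)
  finally have "p * (m powr (p-1) * m) \<le> (a1 * x1 powr p + a2 * x2 powr p + a3 * x3 powr p) + (p-1) * m powr p"
    using th(4) by (simp add: mult_ac)
  then have "p * m powr p \<le> (a1 * x1 powr p + a2 * x2 powr p + a3 * x3 powr p) + (p-1) * m powr p"
    using powr_pm1_mult[OF m0, of p] by simp
  then have "m powr p \<le> a1 * x1 powr p + a2 * x2 powr p + a3 * x3 powr p" by (simp add: algebra_simps)
  then show ?thesis by (simp add: m_def)
qed

lemma powr_limit_le:
  fixes x T p :: real
  assumes T: "0 \<le> T" and p: "0 < p" and le: "\<And>e. e > 0 \<Longrightarrow> x \<le> (T + e) powr p"
  shows "x \<le> T powr p"
proof -
  have lim: "((\<lambda>e. (T + e) powr p) \<longlongrightarrow> T powr p) (at_right 0)"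
  proof (cases "T = 0")
    case True
    have "((\<lambda>e::real. e powr p) \<longlongrightarrow> 0 powr p) (at_right 0)"
      using p by (intro tendsto_powr' tendsto_ident_at) (auto simp: eventually_at_right_less eventually_at_filter)
    then show ?thesis using True by simp
  next
    case False
    have "((\<lambda>e. T + e) \<longlongrightarrow> T + 0) (at_right 0)"
      by (intro tendsto_intros tendsto_ident_at)
    then show ?thesis using T False by (intro tendsto_intros) auto
  qed
  show ?thesis
  proof (rule tendsto_le[OF _ lim tendsto_const])
    show "\<forall>\<^sub>F e in at_right 0. x \<le> (T + e) powr p"
      using eventually_at_right_less[of "0::real"] by (rule eventually_mono) (use le in auto)
  qed simp
qed

lemma powr_scale_aux:
  fixes S A x p :: real
  assumes "S > 0" "A > 0" "0 \<le> x"
  shows "S powr p * ((A / S) * (x / A) powr p) = (S powr (p-1) / A powr (p-1)) * x powr p"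
proof -
  have "S powr p = S powr (p-1) * S" using powr_pm1_mult[of S p] assms by simp
  moreover have "A powr p = A powr (p-1) * A" using powr_pm1_mult[of A p] assms by simp
  moreover have "(x / A) powr p = x powr p / A powr p" using assms by (simp add: powr_divide)
  ultimately show ?thesis using assms by (simp add: field_simps)
qed

lemma mink3:
  fixes a b c :: "'a \<Rightarrow> ennreal"
  assumes p: "1 \<le> p" and [measurable]: "a \<in> borel_measurable M" "b \<in> borel_measurable M" "c \<in> borel_measurable M"
    and A: "0 \<le> A" "(\<integral>\<^sup>+x. epow p (a x) \<partial>M) \<le> ennreal (A powr p)"
    and B: "0 \<le> B" "(\<integral>\<^sup>+x. epow p (b x) \<partial>M) \<le> ennreal (B powr p)"
    and C: "0 \<le> C" "(\<integral>\<^sup>+x. epow p (c x) \<partial>M) \<le> ennreal (C powr p)"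
  shows "(\<integral>\<^sup>+x. epow p (a x + b x + c x) \<partial>M) \<le> ennreal ((A + B + C) powr p)"
proof -
  define X where "X = (\<integral>\<^sup>+x. epow p (a x + b x + c x) \<partial>M)"
  have eps: "X \<le> ennreal ((A + B + C + 3*e) powr p)" if e: "e > 0" for e
  proof -
    define A' where "A' = A + e"
    define B' where "B' = B + e"
    define C' where "C' = C + e"
    define S where "S = A' + B' + C'"
    have pos: "A' > 0" "B' > 0" "C' > 0" "S > 0"
      using A B C e by (auto simp: A'_def B'_def C'_def S_def)
    define ka where "ka = S powr (p-1) / A' powr (p-1)"
    define kb where "kb = S powr (p-1) / B' powr (p-1)"
    define kc where "kc = S powr (p-1) / C' powr (p-1)"
    have wsum: "A'/S + B'/S + C'/S = 1"
      using pos by (simp add: S_def add_divide_distrib[symmetric])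
    have kpos: "ka > 0" "kb > 0" "kc > 0" using pos by (auto simp: ka_def kb_def kc_def)
    have pw: "epow p (a x + b x + c x) \<le> ennreal ka * epow p (a x) + ennreal kb * epow p (b x) + ennreal kc * epow p (c x)" for x
    proof (cases "a x = top \<or> b x = top \<or> c x = top")
      case True
      then show ?thesis using kpos by (auto simp: ennreal_mult_top)
    next
      case False
      then obtain xa xb xc where xs: "a x = ennreal xa" "b x = ennreal xb" "c x = ennreal xc"
        "0 \<le> xa" "0 \<le> xb" "0 \<le> xc"
        by (metis ennreal_cases)
      have "xa + xb + xc = S * ((A'/S)*(xa/A') + (B'/S)*(xb/B') + (C'/S)*(xc/C'))"
        using pos by (simp add: field_simps)
      then have "(xa + xb + xc) powr p = S powr p * ((A'/S)*(xa/A') + (B'/S)*(xb/B') + (C'/S)*(xc/C')) powr p"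
        using pos xs by (simp add: powr_mult)
      also have "\<dots> \<le> S powr p * ((A'/S) * (xa/A') powr p + (B'/S) * (xb/B') powr p + (C'/S) * (xc/C') powr p)"
        using pos xs p wsum by (intro mult_left_mono conv3) auto
      also have "\<dots> = ka * xa powr p + kb * xb powr p + kc * xc powr p"
        using powr_scale_aux[of S A' xa p] powr_scale_aux[of S B' xb p] powr_scale_aux[of S C' xc p] pos xs
        by (simp add: distrib_left ka_def kb_def kc_def)
      finally have "(xa + xb + xc) powr p \<le> ka * xa powr p + kb * xb powr p + kc * xc powr p" .
      then have "ennreal ((xa + xb + xc) powr p) \<le> ennreal (ka * xa powr p + kb * xb powr p + kc * xc powr p)"
        by (rule ennreal_leI)
      then show ?thesis using xs kpos
        by (simp add: epow_ennreal ennreal_plus[symmetric] ennreal_mult[symmetric] del: ennreal_plus)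
    qed
    have "X \<le> (\<integral>\<^sup>+x. ennreal ka * epow p (a x) + ennreal kb * epow p (b x) + ennreal kc * epow p (c x) \<partial>M)"
      unfolding X_def by (intro nn_integral_mono pw)
    also have "\<dots> = ennreal ka * (\<integral>\<^sup>+x. epow p (a x) \<partial>M) + ennreal kb * (\<integral>\<^sup>+x. epow p (b x) \<partial>M)
        + ennreal kc * (\<integral>\<^sup>+x. epow p (c x) \<partial>M)"
      by (simp add: nn_integral_add nn_integral_cmult)
    also have "\<dots> \<le> ennreal ka * ennreal (A powr p) + ennreal kb * ennreal (B powr p) + ennreal kc * ennreal (C powr p)"
      using A B C by (intro add_mono mult_left_mono) auto
    also have "\<dots> = ennreal (ka * A powr p + kb * B powr p + kc * C powr p)"
      using kpos by (simp add: ennreal_plus ennreal_mult)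
    also have "\<dots> \<le> ennreal (ka * A' powr p + kb * B' powr p + kc * C' powr p)"
      using kpos A B C p e by (intro ennreal_leI add_mono mult_left_mono powr_mono2) (auto simp: A'_def B'_def C'_def)
    also have "ka * A' powr p + kb * B' powr p + kc * C' powr p = S powr (p-1) * S"
    proof -
      have "ka * A' powr p = S powr (p-1) * A'"
        unfolding ka_def by (subst powr_pm1_mult[of A' p, symmetric]) (use pos in auto)
      moreover have "kb * B' powr p = S powr (p-1) * B'"
        unfolding kb_def by (subst powr_pm1_mult[of B' p, symmetric]) (use pos in auto)
      moreover have "kc * C' powr p = S powr (p-1) * C'"
        unfolding kc_def by (subst powr_pm1_mult[of C' p, symmetric]) (use pos in auto)
      ultimately show ?thesis by (simp add: S_def algebra_simps)
    qed
    also have "\<dots> = S powr p" using powr_pm1_mult[of S p] pos by simp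
    also have "S = A + B + C + 3*e" by (simp add: S_def A'_def B'_def C'_def)
    finally show ?thesis .
  qed
  have "X < top" using eps[of 1] le_less_trans by fastforce
  then obtain xr where xr: "X = ennreal xr" "0 \<le> xr" by (cases X rule: ennreal_cases) auto
  have "xr \<le> (A + B + C) powr p"
  proof (rule powr_limit_le)
    fix e :: real assume "e > 0"
    then have "ennreal xr \<le> ennreal ((A + B + C + 3*(e/3)) powr p)" using eps[of "e/3"] xr by simp
    then show "xr \<le> (A + B + C + e) powr p" by (subst (asm) ennreal_le_iff) auto
  qed (use A B C p in auto)
  then show ?thesis unfolding X_def[symmetric] xr by (rule ennreal_leI)
qed

lemma nn_count_eq:
  fixes g :: "int \<Rightarrow> real"
  assumes nn: "\<And>k. 0 \<le> g k" and s: "g summable_on UNIV"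
  shows "(\<integral>\<^sup>+k. ennreal (g k) \<partial>count_space UNIV) = ennreal (\<Sum>\<^sub>\<infinity>k. g k)"
proof -
  have "(\<lambda>x. norm (g x)) summable_on UNIV" using s nn by simp
  then have "Infinite_Set_Sum.abs_summable_on g UNIV" using abs_summable_equivalent by blast
  then show ?thesis using nn by (simp add: nn_integral_conv_infsetsum infsetsum_infsum)
qed

lemma nn_count_summable:
  fixes g :: "int \<Rightarrow> real"
  assumes nn: "\<And>k. 0 \<le> g k" and fin: "(\<integral>\<^sup>+k. ennreal (g k) \<partial>count_space UNIV) < top"
  shows "g summable_on UNIV"
proof -
  have "integrable (count_space UNIV) g"
    using fin nn by (intro integrableI_bounded) auto
  then have "Infinite_Set_Sum.abs_summable_on g UNIV" by (simp add: Infinite_Set_Sum.abs_summable_on_def)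
  then have "(\<lambda>x. norm (g x)) summable_on UNIV" using abs_summable_equivalent by blast
  then show ?thesis using nn by simp
qed

lemma infsum_ge_term:
  fixes g :: "int \<Rightarrow> real"
  assumes nn: "\<And>k. 0 \<le> g k" and s: "g summable_on UNIV"
  shows "g j \<le> (\<Sum>\<^sub>\<infinity>k. g k)"
proof -
  have "infsum g {j} \<le> infsum g UNIV"
    using nn s by (intro infsum_mono_neutral) auto
  then show ?thesis by simp
qed

context
  fixes t :: "int \<Rightarrow> real" and \<delta> \<Delta> :: real
  assumes samp: "sampling_seq t \<delta> \<Delta>"
begin

lemma samp_pos: "0 < \<delta>" and samp_gap: "\<delta> \<le> t (k + 1) - t k" and samp_gap2: "t (k + 1) - t k \<le> \<Delta>"
  and samp_mono: "strict_mono t"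
  using samp by (auto simp: sampling_seq_def)

lemma spacing: "real n * \<delta> \<le> t (k + int n) - t k"
proof (induction n)
  case (Suc n)
  have "\<delta> \<le> t (k + int n + 1) - t (k + int n)" by (rule samp_gap)
  then show ?case using Suc by (simp add: algebra_simps)
qed simp

lemma near_window:
  obtains n :: nat where "\<And>u k0 k. \<bar>u - t k0\<bar> < 1 \<Longrightarrow> \<bar>u - t k\<bar> < 1 \<Longrightarrow> k \<in> {k0 - int n .. k0 + int n}"
proof -
  define n where "n = nat \<lceil>2 / \<delta>\<rceil>"
  have key: "k - k0 \<le> int n" if "\<bar>u - t k0\<bar> < 1" "\<bar>u - t k\<bar> < 1" for u k0 k
  proof (cases "k0 \<le> k")
    case True
    define j where "j = nat (k - k0)"
    have kj: "k = k0 + int j" using True by (simp add: j_def)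
    have "real j * \<delta> \<le> t k - t k0" using spacing[of j k0] kj by simp
    also have "\<dots> < 2" using that by linarith
    finally have "real j < 2 / \<delta>" using samp_pos by (simp add: field_simps)
    then have "real j \<le> real n" unfolding n_def by linarith
    then show ?thesis using kj by simp
  qed simp
  show ?thesis
  proof (rule that)
    fix u k0 k assume "\<bar>u - t k0\<bar> < 1" "\<bar>u - t k\<bar> < 1"
    then show "k \<in> {k0 - int n .. k0 + int n}"
      using key[of u k0 k] key[of u k k0] by auto
  qed
qed

end

context
  fixes t :: "int \<Rightarrow> real" and \<delta> \<Delta> :: real and L :: "real \<Rightarrow> real"
  assumes samp: "sampling_seq t \<delta> \<Delta>"
    and L_nonneg: "\<And>x. 0 \<le> L x"
    and L1_bdd: "\<exists>r>0. \<exists>B. \<forall>x. \<bar>x\<bar> < r \<longrightarrow> L x \<le> B"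
    and L2: "\<exists>\<beta>0>0. \<exists>B. \<forall>u. (\<lambda>k. L (u - t k) * \<bar>u - t k\<bar> powr \<beta>0) summable_on UNIV
                          \<and> (\<Sum>\<^sub>\<infinity>k. L (u - t k) * \<bar>u - t k\<bar> powr \<beta>0) \<le> B"
begin

lemma L_bounded:
  obtains Lm where "0 \<le> Lm" "\<And>x. L x \<le> Lm"
proof -
  obtain r B0 where r: "r > 0" "\<And>x. \<bar>x\<bar> < r \<Longrightarrow> L x \<le> B0" using L1_bdd by blast
  obtain \<beta> B where \<beta>: "\<beta> > 0" and sB: "\<And>u. (\<lambda>k. L (u - t k) * \<bar>u - t k\<bar> powr \<beta>) summable_on UNIV"
    "\<And>u. (\<Sum>\<^sub>\<infinity>k. L (u - t k) * \<bar>u - t k\<bar> powr \<beta>) \<le> B" using L2 by blast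
  have tm: "L x * \<bar>x\<bar> powr \<beta> \<le> B" for x
  proof -
    have "L (x + t 0 - t 0) * \<bar>x + t 0 - t 0\<bar> powr \<beta> \<le> (\<Sum>\<^sub>\<infinity>k. L (x + t 0 - t k) * \<bar>x + t 0 - t k\<bar> powr \<beta>)"
      using L_nonneg sB(1)[of "x + t 0"] by (intro infsum_ge_term) auto
    then show ?thesis using sB(2)[of "x + t 0"] by simp
  qed
  have B0: "0 \<le> B" using tm[of 0] L_nonneg[of 0] \<beta> by simp
  have bd: "L x \<le> max B0 (B / r powr \<beta>)" for x
  proof (cases "\<bar>x\<bar> < r")
    case True then show ?thesis using r by fastforce
  next
    case False
    then have xr: "r powr \<beta> \<le> \<bar>x\<bar> powr \<beta>" "0 < r powr \<beta>" using r \<beta> by (auto intro!: powr_mono2)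
    have xp: "0 < \<bar>x\<bar> powr \<beta>" using xr by linarith
    have "L x \<le> B / \<bar>x\<bar> powr \<beta>" using tm[of x] xp by (subst pos_le_divide_eq) auto
    also have "\<dots> \<le> B / r powr \<beta>" using xr xp B0 by (intro divide_left_mono) (auto intro: mult_pos_pos)
    finally show ?thesis by simp
  qed
  show ?thesis
  proof (rule that[of "max (max B0 (B / r powr \<beta>)) 0"])
    fix x show "L x \<le> max (max B0 (B / r powr \<beta>)) 0" using bd[of x] by linarith
  qed simp
qed

lemma Lsum_bound:
  obtains Mb where "0 \<le> Mb" "\<And>u. (\<integral>\<^sup>+k. ennreal (L (u - t k)) \<partial>count_space UNIV) \<le> ennreal Mb"
proof -
  obtain \<beta> B where \<beta>: "\<beta> > 0" and sB: "\<And>u. (\<lambda>k. L (u - t k) * \<bar>u - t k\<bar> powr \<beta>) summable_on UNIV"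
    "\<And>u. (\<Sum>\<^sub>\<infinity>k. L (u - t k) * \<bar>u - t k\<bar> powr \<beta>) \<le> B" using L2 by blast
  obtain Lm where Lm: "0 \<le> Lm" "\<And>x. L x \<le> Lm" using L_bounded by blast
  obtain n :: nat where win: "\<And>u k0 k. \<bar>u - t k0\<bar> < 1 \<Longrightarrow> \<bar>u - t k\<bar> < 1 \<Longrightarrow> k \<in> {k0 - int n .. k0 + int n}"
    using near_window[OF samp] by blast
  have B0: "0 \<le> B" using sB(2)[of 0] infsum_nonneg[of UNIV "\<lambda>k. L (0 - t k) * \<bar>0 - t k\<bar> powr \<beta>"] L_nonneg
    by (smt (verit) mult_nonneg_nonneg powr_ge_zero)
  have main: "(\<integral>\<^sup>+k. ennreal (L (u - t k)) \<partial>count_space UNIV) \<le> ennreal (B + Lm * (2 * n + 1))" for u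
  proof -
    define N where "N = {k. \<bar>u - t k\<bar> < 1}"
    have pw: "ennreal (L (u - t k)) \<le> ennreal (L (u - t k) * \<bar>u - t k\<bar> powr \<beta>) + ennreal Lm * indicator N k" for k
    proof (cases "k \<in> N")
      case True
      then have "ennreal (L (u - t k)) \<le> ennreal Lm * indicator N k" using Lm by (simp add: ennreal_leI)
      then show ?thesis by (simp add: add_increasing)
    next
      case False
      then have "1 \<le> \<bar>u - t k\<bar> powr \<beta>" using \<beta> by (simp add: N_def ge_one_powr_ge_zero)
      then have "L (u - t k) \<le> L (u - t k) * \<bar>u - t k\<bar> powr \<beta>"
        using L_nonneg[of "u - t k"] by (simp add: mult_le_cancel_left1)
      then show ?thesis by (simp add: ennreal_leI add_increasing2)
    qed
    have "(\<integral>\<^sup>+k. ennreal (L (u - t k)) \<partial>count_space UNIV) \<le>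
      (\<integral>\<^sup>+k. ennreal (L (u - t k) * \<bar>u - t k\<bar> powr \<beta>) + ennreal Lm * indicator N k \<partial>count_space UNIV)"
      by (intro nn_integral_mono pw)
    also have "\<dots> = (\<integral>\<^sup>+k. ennreal (L (u - t k) * \<bar>u - t k\<bar> powr \<beta>) \<partial>count_space UNIV)
        + ennreal Lm * emeasure (count_space UNIV) N"
      by (simp add: nn_integral_add nn_integral_cmult_indicator)
    also have "(\<integral>\<^sup>+k. ennreal (L (u - t k) * \<bar>u - t k\<bar> powr \<beta>) \<partial>count_space UNIV) \<le> ennreal B"
      using nn_count_eq[of "\<lambda>k. L (u - t k) * \<bar>u - t k\<bar> powr \<beta>", OF _ sB(1)] sB(2)[of u] L_nonneg
      by (simp add: ennreal_leI)
    also have "emeasure (count_space UNIV) N \<le> of_nat (2 * n + 1)"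
    proof (cases "N = {}")
      case False
      then obtain k0 where k0: "k0 \<in> N" by blast
      then have sub: "N \<subseteq> {k0 - int n .. k0 + int n}" using win by (auto simp: N_def)
      have "emeasure (count_space UNIV) N \<le> emeasure (count_space UNIV) {k0 - int n .. k0 + int n}"
        using sub by (intro emeasure_mono) auto
      also have "\<dots> = of_nat (2 * n + 1)"
      proof -
        have "card {k0 - int n .. k0 + int n} = 2 * n + 1" by simp
        then show ?thesis by simp
      qed
      finally show ?thesis .
    qed simp
    finally have "(\<integral>\<^sup>+k. ennreal (L (u - t k)) \<partial>count_space UNIV) \<le> ennreal B + ennreal Lm * of_nat (2 * n + 1)"
      by (simp add: add_left_mono mult_left_mono)
    also have "\<dots> = ennreal (B + Lm * (2 * n + 1))"
      using B0 Lm by (simp add: ennreal_plus ennreal_mult ennreal_of_nat_eq_real_of_nat)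
    finally show ?thesis .
  qed
  show ?thesis by (rule that[OF _ main]) (use B0 Lm in simp)
qed

lemma Lsum_summable: "(\<lambda>k. L (u - t k)) summable_on UNIV"
proof -
  obtain Mb where "\<And>u. (\<integral>\<^sup>+k. ennreal (L (u - t k)) \<partial>count_space UNIV) \<le> ennreal Mb"
    using Lsum_bound by blast
  then show ?thesis using L_nonneg
    by (intro nn_count_summable) (auto intro: le_less_trans[OF _ ennreal_less_top])
qed

lemma m0_bdd: "bdd_above (range (\<lambda>u. \<Sum>\<^sub>\<infinity>k. L (u - t k)))"
proof -
  obtain Mb where Mb: "0 \<le> Mb" "\<And>u. (\<integral>\<^sup>+k. ennreal (L (u - t k)) \<partial>count_space UNIV) \<le> ennreal Mb"
    using Lsum_bound by blast
  have "(\<Sum>\<^sub>\<infinity>k. L (u - t k)) \<le> Mb" for u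
    using Mb(2)[of u] nn_count_eq[of "\<lambda>k. L (u - t k)", OF L_nonneg Lsum_summable] Mb(1)
    by (simp add: ennreal_le_iff)
  then show ?thesis by (intro bdd_aboveI2) auto
qed

lemma Lsum_le_m0: "(\<integral>\<^sup>+k. ennreal (L (u - t k)) \<partial>count_space UNIV) \<le> ennreal (m0 t L)"
proof -
  have "(\<Sum>\<^sub>\<infinity>k. L (u - t k)) \<le> m0 t L"
    unfolding m0_def by (rule cSUP_upper[OF _ m0_bdd]) simp
  then show ?thesis
    using nn_count_eq[of "\<lambda>k. L (u - t k)", OF L_nonneg Lsum_summable] by (simp add: ennreal_leI)
qed

lemma m0_nonneg: "0 \<le> m0 t L"
proof -
  have "(\<Sum>\<^sub>\<infinity>k. L (0 - t k)) \<le> m0 t L"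
    unfolding m0_def by (rule cSUP_upper[OF _ m0_bdd]) simp
  moreover have "0 \<le> (\<Sum>\<^sub>\<infinity>k. L (0 - t k))" using L_nonneg by (intro infsum_nonneg) auto
  ultimately show ?thesis by simp
qed

end

lemma Lp_le_imp:
  fixes g :: "real \<Rightarrow> real"
  assumes p: "0 < p" and c: "0 \<le> c" and le: "Lp_norm p g \<le> ennreal c"
  shows "(\<integral>\<^sup>+x. ennreal (\<bar>g x\<bar> powr p) \<partial>lborel) \<le> ennreal (c powr p)"
proof -
  define I where "I = (\<integral>\<^sup>+x. ennreal (\<bar>g x\<bar> powr p) \<partial>lborel)"
  have "I \<noteq> top"
  proof
    assume "I = top"
    then have "Lp_norm p g = top" by (simp add: Lp_norm_def I_def)
    with le show False by (simp add: top_unique)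
  qed
  then obtain ir where ir: "I = ennreal ir" "0 \<le> ir" by (cases I rule: ennreal_cases) auto
  have "Lp_norm p g = ennreal (ir powr (1/p))"
    using ir by (simp add: Lp_norm_def I_def[symmetric])
  with le have "ir powr (1/p) \<le> c" using c by (simp add: ennreal_le_iff)
  then have "(ir powr (1/p)) powr p \<le> c powr p" using p by (intro powr_mono2) auto
  moreover have "(ir powr (1/p)) powr p = ir" using p ir by (simp add: powr_powr)
  ultimately show ?thesis using ir by (simp add: I_def[symmetric] ennreal_leI)
qed

lemma nn_integral_shift:
  fixes F :: "real \<Rightarrow> ennreal"
  assumes [measurable]: "F \<in> borel_measurable borel"
  shows "(\<integral>\<^sup>+u. F (u + c) \<partial>lborel) = (\<integral>\<^sup>+u. F u \<partial>lborel)"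
  using nn_integral_real_affine[of F 1 c] by (simp add: add.commute)

definition Omb :: "real \<Rightarrow> real \<Rightarrow> real \<Rightarrow> real \<Rightarrow> real \<Rightarrow> real" where
  "Omb p \<alpha> C1 \<epsilon> h = (if \<bar>h\<bar> < \<epsilon> then (C1 * \<bar>h\<bar> powr \<alpha>) powr p
      else (C1 * (4/\<epsilon>) powr (1-\<alpha>) * \<bar>h\<bar>) powr p)"

context
  fixes p \<alpha> C1 :: real and f :: "real \<Rightarrow> real"
  assumes p: "1 \<le> p" and alpha: "0 < \<alpha>" "\<alpha> \<le> 1" and C1: "C1 > 0"
    and f: "Lip_with \<alpha> p C1 f"
begin

lemma f_meas: "f \<in> borel_measurable borel"
  using f by (simp add: Lip_with_def in_Lp_def)

lemma shift_small:
  obtains \<epsilon> where "\<epsilon> > 0" "\<And>h. \<bar>h\<bar> < \<epsilon> \<Longrightarrow>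
    (\<integral>\<^sup>+u. ennreal (\<bar>f (u + h) - f u\<bar> powr p) \<partial>lborel) \<le> ennreal ((C1 * \<bar>h\<bar> powr \<alpha>) powr p)"
proof -
  obtain \<epsilon> where e: "\<epsilon> > 0" "\<And>d. 0 < d \<Longrightarrow> d < \<epsilon> \<Longrightarrow> omega_p p f d \<le> ennreal (C1 * d powr \<alpha>)"
    using f unfolding Lip_with_def by blast
  show ?thesis
  proof (rule that[OF e(1)])
    fix h :: real assume h: "\<bar>h\<bar> < \<epsilon>"
    show "(\<integral>\<^sup>+u. ennreal (\<bar>f (u + h) - f u\<bar> powr p) \<partial>lborel) \<le> ennreal ((C1 * \<bar>h\<bar> powr \<alpha>) powr p)"
    proof (cases "h = 0")
      case True then show ?thesis by simp
    next
      case False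
      have "Lp_norm p (\<lambda>x. f (x + h) - f x) \<le> omega_p p f \<bar>h\<bar>"
        unfolding omega_p_def by (rule SUP_upper) simp
      also have "\<dots> \<le> ennreal (C1 * \<bar>h\<bar> powr \<alpha>)" using e(2)[of "\<bar>h\<bar>"] h False by simp
      finally show ?thesis using p C1 by (intro Lp_le_imp) auto
    qed
  qed
qed

lemma shift_n:
  assumes eb: "\<And>h. \<bar>h\<bar> < \<epsilon> \<Longrightarrow>
    (\<integral>\<^sup>+u. ennreal (\<bar>f (u + h) - f u\<bar> powr p) \<partial>lborel) \<le> ennreal ((C1 * \<bar>h\<bar> powr \<alpha>) powr p)"
    and hn: "\<bar>h'\<bar> < \<epsilon>"
  shows "(\<integral>\<^sup>+u. ennreal (\<bar>f (u + real j * h') - f u\<bar> powr p) \<partial>lborel)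
     \<le> ennreal ((real j * (C1 * \<bar>h'\<bar> powr \<alpha>)) powr p)"
proof (induction j)
  case 0 then show ?case by simp
next
  case (Suc j)
  define c where "c = C1 * \<bar>h'\<bar> powr \<alpha>"
  have c0: "0 \<le> c" using C1 by (simp add: c_def)
  define a where "a u = ennreal \<bar>f (u + real j * h' + h') - f (u + real j * h')\<bar>" for u
  define b where "b u = ennreal \<bar>f (u + real j * h') - f u\<bar>" for u
  have [measurable]: "f \<in> borel_measurable borel" by (rule f_meas)
  have ma[measurable]: "a \<in> borel_measurable lborel" "b \<in> borel_measurable lborel"
    unfolding a_def[abs_def] b_def[abs_def] by measurable
  have A: "(\<integral>\<^sup>+u. epow p (a u) \<partial>lborel) \<le> ennreal (c powr p)"
  proof -
    have "(\<integral>\<^sup>+u. epow p (a u) \<partial>lborel) = (\<integral>\<^sup>+u. ennreal (\<bar>f (u + real j * h' + h') - f (u + real j * h')\<bar> powr p) \<partial>lborel)"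
      unfolding a_def by (simp add: epow_ennreal)
    also have "\<dots> = (\<integral>\<^sup>+u. ennreal (\<bar>f (u + h') - f u\<bar> powr p) \<partial>lborel)"
      by (rule nn_integral_shift[of "\<lambda>v. ennreal (\<bar>f (v + h') - f v\<bar> powr p)" "real j * h'"]) measurable
    also have "\<dots> \<le> ennreal (c powr p)" unfolding c_def by (rule eb[OF hn])
    finally show ?thesis .
  qed
  have B: "(\<integral>\<^sup>+u. epow p (b u) \<partial>lborel) \<le> ennreal ((real j * c) powr p)"
    using Suc.IH unfolding b_def c_def by (simp add: epow_ennreal)
  have mk: "(\<integral>\<^sup>+u. epow p (a u + b u + 0) \<partial>lborel) \<le> ennreal ((c + real j * c + 0) powr p)"
  proof (rule mink3[OF p ma(1) ma(2) borel_measurable_const c0 A _ B order_refl])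
    show "0 \<le> real j * c" using c0 by simp
  qed simp
  have pw: "ennreal (\<bar>f (u + real (Suc j) * h') - f u\<bar> powr p) \<le> epow p (a u + b u + 0)" for u
  proof -
    have "\<bar>f (u + real (Suc j) * h') - f u\<bar> \<le> \<bar>f (u + real j * h' + h') - f (u + real j * h')\<bar> + \<bar>f (u + real j * h') - f u\<bar>"
    proof -
      have "u + real (Suc j) * h' = u + real j * h' + h'" by (simp add: algebra_simps)
      then show ?thesis by (simp only:)
    qed
    then have "ennreal \<bar>f (u + real (Suc j) * h') - f u\<bar> \<le> ennreal (\<bar>f (u + real j * h' + h') - f (u + real j * h')\<bar> + \<bar>f (u + real j * h') - f u\<bar>)"
      by (rule ennreal_leI)
    also have "\<dots> = a u + b u + 0" by (simp add: a_def b_def ennreal_plus)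
    finally have "epow p (ennreal \<bar>f (u + real (Suc j) * h') - f u\<bar>) \<le> epow p (a u + b u + 0)"
      using p by (intro epow_mono) auto
    then show ?thesis by (simp add: epow_ennreal)
  qed
  have "(\<integral>\<^sup>+u. ennreal (\<bar>f (u + real (Suc j) * h') - f u\<bar> powr p) \<partial>lborel) \<le> ennreal ((c + real j * c + 0) powr p)"
    using order_trans[OF nn_integral_mono[OF pw] mk] .
  moreover have "c + real j * c + 0 = real (Suc j) * (C1 * \<bar>h'\<bar> powr \<alpha>)"
    by (simp add: c_def algebra_simps)
  ultimately show ?case by simp
qed

lemma shift_global:
  obtains \<epsilon> where "\<epsilon> > 0" "\<And>h. \<bar>h\<bar> < \<epsilon> \<Longrightarrow>
    (\<integral>\<^sup>+u. ennreal (\<bar>f (u + h) - f u\<bar> powr p) \<partial>lborel) \<le> ennreal ((C1 * \<bar>h\<bar> powr \<alpha>) powr p)"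
    "\<And>h. (\<integral>\<^sup>+u. ennreal (\<bar>f (u + h) - f u\<bar> powr p) \<partial>lborel) \<le> ennreal (Omb p \<alpha> C1 \<epsilon> h)"
proof -
  obtain \<epsilon> where e: "\<epsilon> > 0" and eb: "\<And>h. \<bar>h\<bar> < \<epsilon> \<Longrightarrow>
    (\<integral>\<^sup>+u. ennreal (\<bar>f (u + h) - f u\<bar> powr p) \<partial>lborel) \<le> ennreal ((C1 * \<bar>h\<bar> powr \<alpha>) powr p)"
    using shift_small by blast
  have "(\<integral>\<^sup>+u. ennreal (\<bar>f (u + h) - f u\<bar> powr p) \<partial>lborel) \<le> ennreal (Omb p \<alpha> C1 \<epsilon> h)" for h
  proof (cases "\<bar>h\<bar> < \<epsilon>")
    case True then show ?thesis using eb by (simp add: Omb_def)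
  next
    case False
    then have hpos: "\<bar>h\<bar> > 0" "\<bar>h\<bar> \<ge> \<epsilon>" using e by auto
    define n where "n = nat \<lceil>2 * \<bar>h\<bar> / \<epsilon>\<rceil>"
    have q: "2 * \<bar>h\<bar> / \<epsilon> \<ge> 2" using hpos e by (simp add: field_simps)
    have n1: "real n \<ge> 2 * \<bar>h\<bar> / \<epsilon>" unfolding n_def by linarith
    have n2: "real n \<le> 4 * \<bar>h\<bar> / \<epsilon>"
    proof -
      have "real n < 2 * \<bar>h\<bar> / \<epsilon> + 1" unfolding n_def using q by linarith
      also have "\<dots> \<le> 4 * \<bar>h\<bar> / \<epsilon>"
      proof -
        have "4 * \<bar>h\<bar> / \<epsilon> = 2 * \<bar>h\<bar> / \<epsilon> + 2 * \<bar>h\<bar> / \<epsilon>" by (simp add: field_simps)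
        then show ?thesis using q by linarith
      qed
      finally show ?thesis by simp
    qed
    have npos: "real n > 0" using n1 q by linarith
    define h' where "h' = h / real n"
    have hh': "real n * h' = h" using npos by (simp add: h'_def)
    have ah': "\<bar>h'\<bar> = \<bar>h\<bar> / real n" using npos by (simp add: h'_def)
    have "\<bar>h'\<bar> \<le> \<epsilon> / 2" unfolding ah' using n1 npos e hpos by (simp add: field_simps)
    then have h'e: "\<bar>h'\<bar> < \<epsilon>" using e by simp
    have "(\<integral>\<^sup>+u. ennreal (\<bar>f (u + h) - f u\<bar> powr p) \<partial>lborel) \<le> ennreal ((real n * (C1 * \<bar>h'\<bar> powr \<alpha>)) powr p)"
      using shift_n[OF eb h'e, of n] hh' by simp
    also have "\<dots> \<le> ennreal ((C1 * (4/\<epsilon>) powr (1-\<alpha>) * \<bar>h\<bar>) powr p)"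
    proof (intro ennreal_leI powr_mono2)
      have "real n * \<bar>h'\<bar> powr \<alpha> = real n powr (1 - \<alpha>) * \<bar>h\<bar> powr \<alpha>"
        unfolding ah' using npos hpos by (simp add: powr_divide powr_diff)
      also have "\<dots> \<le> (4/\<epsilon> * \<bar>h\<bar>) powr (1 - \<alpha>) * \<bar>h\<bar> powr \<alpha>"
        using n2 npos alpha by (intro mult_right_mono powr_mono2) auto
      also have "\<dots> = (4/\<epsilon>) powr (1-\<alpha>) * \<bar>h\<bar>"
      proof -
        have "(4/\<epsilon> * \<bar>h\<bar>) powr (1 - \<alpha>) = (4/\<epsilon>) powr (1-\<alpha>) * \<bar>h\<bar> powr (1 - \<alpha>)"
          using e by (intro powr_mult) 
        moreover have "\<bar>h\<bar> powr (1 - \<alpha>) * \<bar>h\<bar> powr \<alpha> = \<bar>h\<bar>"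
          using hpos by (simp add: powr_add[symmetric])
        ultimately show ?thesis by (simp add: mult.assoc)
      qed
      finally have "real n * \<bar>h'\<bar> powr \<alpha> \<le> (4/\<epsilon>) powr (1-\<alpha>) * \<bar>h\<bar>" .
      then show "real n * (C1 * \<bar>h'\<bar> powr \<alpha>) \<le> C1 * (4/\<epsilon>) powr (1-\<alpha>) * \<bar>h\<bar>"
        using C1 by (simp add: mult.left_commute mult.assoc)
    qed (use p C1 in auto)
    finally show ?thesis using False by (simp add: Omb_def)
  qed
  then show ?thesis using that e eb by blast
qed

end

lemma meas_count_int:
  fixes F :: "int \<Rightarrow> 'a \<Rightarrow> ennreal"
  assumes [measurable]: "\<And>k. F k \<in> borel_measurable M"
  shows "(\<lambda>x. \<integral>\<^sup>+k. F k x \<partial>count_space UNIV) \<in> borel_measurable M"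
proof -
  have "(\<lambda>y. F (snd y) (fst y)) \<in> borel_measurable (M \<Otimes>\<^sub>M count_space UNIV)"
    by (rule measurable_compose_countable[where f="\<lambda>k y. F k (fst y)"]) auto
  then have "case_prod (\<lambda>x k. F k x) \<in> borel_measurable (M \<Otimes>\<^sub>M count_space UNIV)"
    by (simp add: case_prod_beta')
  then show ?thesis
    using sigma_finite_measure.borel_measurable_nn_integral[OF sigma_finite_measure_count_space_countable,
      of UNIV "\<lambda>x k. F k x" M] by simp
qed

definition Ik :: "(int \<Rightarrow> real) \<Rightarrow> real \<Rightarrow> int \<Rightarrow> real set" where
  "Ik t w k = {t k / w .. t (k + 1) / w}"

definition P1 :: "(int \<Rightarrow> real) \<Rightarrow> real \<Rightarrow> (real \<Rightarrow> real) \<Rightarrow> int \<Rightarrow> real \<Rightarrow> ennreal" where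
  "P1 t w f k x = (\<integral>\<^sup>+u. indicator (Ik t w k) u * ennreal \<bar>f u - f (u + (x - t k / w))\<bar> \<partial>lborel)"

definition P2 :: "(int \<Rightarrow> real) \<Rightarrow> real \<Rightarrow> (real \<Rightarrow> real) \<Rightarrow> int \<Rightarrow> real \<Rightarrow> ennreal" where
  "P2 t w f k x = (\<integral>\<^sup>+u. indicator (Ik t w k) u * ennreal \<bar>f (u + (x - t k / w)) - f x\<bar> \<partial>lborel)"

definition JJ :: "(int \<Rightarrow> real) \<Rightarrow> (real \<Rightarrow> real) \<Rightarrow> real \<Rightarrow> (int \<Rightarrow> real \<Rightarrow> ennreal) \<Rightarrow> real \<Rightarrow> ennreal" where
  "JJ t L w P x = (\<integral>\<^sup>+k. ennreal (L (w * x - t k)) * (ennreal (w / (t (k + 1) - t k)) * P k x) \<partial>count_space UNIV)"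

lemma P1_meas[measurable]:
  assumes [measurable]: "f \<in> borel_measurable borel"
  shows "P1 t w f k \<in> borel_measurable lborel"
  unfolding P1_def[abs_def] Ik_def by measurable

lemma P2_meas[measurable]:
  assumes [measurable]: "f \<in> borel_measurable borel"
  shows "P2 t w f k \<in> borel_measurable lborel"
  unfolding P2_def[abs_def] Ik_def by measurable

lemma JJ_meas[measurable]:
  assumes [measurable]: "L \<in> borel_measurable borel" "\<And>k. P k \<in> borel_measurable lborel"
  shows "JJ t L w P \<in> borel_measurable lborel"
  unfolding JJ_def[abs_def]
proof (intro meas_count_int)
  fix k
  have [measurable]: "P k \<in> borel_measurable lborel" by fact
  show "(\<lambda>x. ennreal (L (w * x - t k)) * (ennreal (w / (t (k + 1) - t k)) * P k x)) \<in> borel_measurable lborel"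
    by measurable
qed

lemma f_set_int:
  assumes p: "1 \<le> p" and fLp: "in_Lp p f"
  shows "set_integrable lborel {a..b} f"
proof -
  have fm[measurable]: "f \<in> borel_measurable borel" using fLp by (simp add: in_Lp_def)
  have ip: "integrable lborel (\<lambda>x. \<bar>f x\<bar> powr p)" using fLp by (simp add: in_Lp_def)
  have "integrable lborel (\<lambda>u. indicator {a..b} u * (1 + \<bar>f u\<bar> powr p) :: real)"
  proof -
    have "integrable lborel (\<lambda>u. indicator {a..b} u * 1 :: real)"
      by (simp add: integrable_indicator_iff emeasure_lborel_Icc_eq less_top[symmetric])
    moreover have "integrable lborel (\<lambda>u. indicator {a..b} u * \<bar>f u\<bar> powr p :: real)"
      using integrable_real_mult_indicator[OF _ ip, of "{a..b}"] by (simp add: mult.commute)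
    ultimately show ?thesis by (simp add: distrib_left)
  qed
  then show ?thesis unfolding set_integrable_def
  proof (rule Bochner_Integration.integrable_bound)
    show "(\<lambda>x. indicat_real {a..b} x *\<^sub>R f x) \<in> borel_measurable lborel" by measurable
    show "AE x in lborel. norm (indicat_real {a..b} x *\<^sub>R f x) \<le> norm (indicator {a..b} x * (1 + \<bar>f x\<bar> powr p) :: real)"
    proof (intro AE_I2)
      fix x
      have "\<bar>f x\<bar> \<le> 1 + \<bar>f x\<bar> powr p"
      proof (cases "\<bar>f x\<bar> \<le> 1")
        case True then show ?thesis by (smt (verit) powr_ge_zero)
      next
        case False
        then have "\<bar>f x\<bar> powr 1 \<le> \<bar>f x\<bar> powr p" using p by (intro powr_mono) auto
        then show ?thesis using False by simp
      qed
      then show "norm (indicat_real {a..b} x *\<^sub>R f x) \<le> norm (indicator {a..b} x * (1 + \<bar>f x\<bar> powr p) :: real)"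
        by (auto simp: indicator_def)
    qed
  qed
qed

lemma T_bound_pt:
  assumes chi2: "\<And>x. K x 0 = 0"
    and T: "T_w K t w x \<le> ennreal (M2 * w powr (- \<theta>0))" and M2: "0 \<le> M2"
  shows "\<bar>(\<Sum>\<^sub>\<infinity>k. K (w * x - t k) (f x)) - f x\<bar> \<le> M2 * w powr (- \<theta>0) * \<bar>f x\<bar>"
proof (cases "f x = 0")
  case True then show ?thesis using chi2 by simp
next
  case False
  define s where "s = (\<Sum>\<^sub>\<infinity>k. K (w * x - t k) (f x))"
  have "ennreal \<bar>(1 / f x) * s - 1\<bar> \<le> T_w K t w x"
    unfolding T_w_def s_def by (rule SUP_upper) (use False in simp)
  also note T
  finally have le: "\<bar>(1 / f x) * s - 1\<bar> \<le> M2 * w powr (- \<theta>0)"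
    using M2 by (subst (asm) ennreal_le_iff) auto
  have "\<bar>s - f x\<bar> = \<bar>f x\<bar> * \<bar>(1 / f x) * s - 1\<bar>"
    using False by (simp add: abs_mult[symmetric] field_simps)
  also have "\<dots> \<le> \<bar>f x\<bar> * (M2 * w powr (- \<theta>0))" using le by (intro mult_left_mono) auto
  finally show ?thesis by (simp add: s_def mult_ac)
qed

lemma ak_bound:
  assumes p: "1 \<le> p" and fLp: "in_Lp p f" and w: "0 < w" and D: "t k < t (k + 1)"
  shows "ennreal \<bar>(w / (t (k + 1) - t k)) * (LINT u:{t k / w .. t (k + 1) / w}|lborel. f u) - f x\<bar>
     \<le> ennreal (w / (t (k + 1) - t k)) * (P1 t w f k x + P2 t w f k x)"
proof -
  have fm[measurable]: "f \<in> borel_measurable borel" using fLp by (simp add: in_Lp_def)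
  define a where "a = t k / w"
  define b where "b = t (k + 1) / w"
  define D where "D = t (k + 1) - t k"
  have Dpos: "D > 0" using D by (simp add: D_def)
  have ab: "a \<le> b" using D w by (simp add: a_def b_def divide_right_mono)
  have ba: "b - a = D / w" by (simp add: a_def b_def D_def diff_divide_distrib)
  have si: "set_integrable lborel {a..b} f" by (rule f_set_int[OF p fLp])
  have sc: "set_integrable lborel {a..b} (\<lambda>u. f x)"
    by (simp add: set_integrable_def integrable_indicator_iff emeasure_lborel_Icc_eq less_top[symmetric])
  have "(LINT u:{a..b}|lborel. f u - f x) = (LINT u:{a..b}|lborel. f u) - (LINT u:{a..b}|lborel. f x)"
    using si sc by (rule set_integral_diff)
  also have "(LINT u:{a..b}|lborel. f x) = (b - a) * f x"
    using ab by (subst set_integral_const) (auto simp: emeasure_lborel_Icc_eq)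
  finally have eq: "(w / D) * (LINT u:{a..b}|lborel. f u) - f x = (w / D) * (LINT u:{a..b}|lborel. f u - f x)"
    using Dpos w ba by (simp add: field_simps)
  have sd: "set_integrable lborel {a..b} (\<lambda>u. f u - f x)" using si sc by (rule set_integral_diff)
  have "ennreal \<bar>LINT u:{a..b}|lborel. f u - f x\<bar> \<le> (\<integral>\<^sup>+u. ennreal (norm (indicator {a..b} u *\<^sub>R (f u - f x))) \<partial>lborel)"
    using integral_norm_bound_ennreal[OF sd[unfolded set_integrable_def]]
    by (simp add: set_lebesgue_integral_def)
  also have "\<dots> = (\<integral>\<^sup>+u. indicator {a..b} u * ennreal \<bar>f u - f x\<bar> \<partial>lborel)"
    by (intro nn_integral_cong) (auto simp: indicator_def)
  also have "\<dots> \<le> (\<integral>\<^sup>+u. indicator {a..b} u * ennreal \<bar>f u - f (u + (x - a))\<bar>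
       + indicator {a..b} u * ennreal \<bar>f (u + (x - a)) - f x\<bar> \<partial>lborel)"
  proof (intro nn_integral_mono)
    fix u
    have "ennreal \<bar>f u - f x\<bar> \<le> ennreal (\<bar>f u - f (u + (x - a))\<bar> + \<bar>f (u + (x - a)) - f x\<bar>)"
      by (intro ennreal_leI) linarith
    then show "indicator {a..b} u * ennreal \<bar>f u - f x\<bar> \<le> indicator {a..b} u * ennreal \<bar>f u - f (u + (x - a))\<bar>
       + indicator {a..b} u * ennreal \<bar>f (u + (x - a)) - f x\<bar>"
      by (auto simp: indicator_def ennreal_plus)
  qed
  also have "\<dots> = P1 t w f k x + P2 t w f k x"
    unfolding P1_def P2_def Ik_def a_def[symmetric] b_def[symmetric]
    by (intro nn_integral_add) measurable
  finally have le: "ennreal \<bar>LINT u:{a..b}|lborel. f u - f x\<bar> \<le> P1 t w f k x + P2 t w f k x" .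
  have "ennreal \<bar>(w / D) * (LINT u:{a..b}|lborel. f u) - f x\<bar> = ennreal (w / D) * ennreal \<bar>LINT u:{a..b}|lborel. f u - f x\<bar>"
  proof -
    have "\<bar>(w / D) * (LINT u:{a..b}|lborel. f u - f x)\<bar> = (w / D) * \<bar>LINT u:{a..b}|lborel. f u - f x\<bar>"
      using Dpos w by (simp add: abs_mult)
    then show ?thesis unfolding eq using Dpos w by (simp only: ennreal_mult'')
  qed
  also have "\<dots> \<le> ennreal (w / D) * (P1 t w f k x + P2 t w f k x)"
    using le by (rule mult_left_mono) simp
  finally show ?thesis by (simp add: a_def b_def D_def)
qed

lemma pointwise_main:
  assumes p: "1 \<le> p" and fLp: "in_Lp p f" and w: "0 < w" and samp: "sampling_seq t \<delta> \<Delta>"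
    and chi1: "\<And>x u w. w > 0 \<Longrightarrow> (\<lambda>k. \<bar>K (w * x - t k) u\<bar>) summable_on UNIV"
    and chi2: "\<And>x. K x 0 = 0"
    and chi3: "\<And>x u v. \<bar>K x u - K x v\<bar> \<le> L x * \<bar>u - v\<bar>"
    and L_nonneg: "\<And>x. 0 \<le> L x"
    and T: "T_w K t w x \<le> ennreal (M2 * w powr (- \<theta>0))" and M2: "0 \<le> M2"
  shows "ennreal \<bar>S_w K t w f x - f x\<bar> \<le> JJ t L w (P1 t w f) x + JJ t L w (P2 t w f) x
           + ennreal (M2 * w powr (- \<theta>0) * \<bar>f x\<bar>)"
proof -
  define y where "y k = w * x - t k" for k
  define D where "D k = t (k + 1) - t k" for k
  define a where "a k = (w / D k) * (LINT u:{t k / w .. t (k + 1) / w}|lborel. f u)" for k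
  define h where "h k = L (y k) * \<bar>a k - f x\<bar>" for k
  define E where "E = (\<integral>\<^sup>+k. ennreal (h k) \<partial>count_space UNIV)"
  have hnn: "0 \<le> h k" for k using L_nonneg by (simp add: h_def)
  have Dpos: "t k < t (k + 1)" for k using samp_mono[OF samp] by (simp add: strict_mono_def)
  have E_le: "E \<le> JJ t L w (P1 t w f) x + JJ t L w (P2 t w f) x"
  proof -
    have "E \<le> (\<integral>\<^sup>+k. ennreal (L (w * x - t k)) * (ennreal (w / (t (k + 1) - t k)) * P1 t w f k x)
        + ennreal (L (w * x - t k)) * (ennreal (w / (t (k + 1) - t k)) * P2 t w f k x) \<partial>count_space UNIV)"
      unfolding E_def
    proof (intro nn_integral_mono)
      fix k
      have "ennreal (h k) = ennreal (L (w * x - t k)) * ennreal \<bar>a k - f x\<bar>"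
        using L_nonneg by (simp add: h_def y_def ennreal_mult)
      also have "\<dots> \<le> ennreal (L (w * x - t k)) * (ennreal (w / (t (k + 1) - t k)) * (P1 t w f k x + P2 t w f k x))"
        using ak_bound[OF p fLp w Dpos[of k], of x] by (intro mult_left_mono) (auto simp: a_def D_def)
      finally show "ennreal (h k) \<le> ennreal (L (w * x - t k)) * (ennreal (w / (t (k + 1) - t k)) * P1 t w f k x)
        + ennreal (L (w * x - t k)) * (ennreal (w / (t (k + 1) - t k)) * P2 t w f k x)"
        by (simp add: distrib_left)
    qed
    also have "\<dots> = JJ t L w (P1 t w f) x + JJ t L w (P2 t w f) x"
      unfolding JJ_def by (intro nn_integral_add) auto
    finally show ?thesis .
  qed
  have main: "ennreal \<bar>S_w K t w f x - f x\<bar> \<le> E + ennreal (M2 * w powr (- \<theta>0) * \<bar>f x\<bar>)"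
  proof (cases "E = top")
    case True then show ?thesis by simp
  next
    case False
    then have Elt: "E < top" by (simp add: less_top)
    have hs: "h summable_on UNIV" using nn_count_summable[OF hnn] Elt by (simp add: E_def)
    have Eeq: "E = ennreal (\<Sum>\<^sub>\<infinity>k. h k)" unfolding E_def by (rule nn_count_eq[OF hnn hs])
    define d where "d k = K (y k) (a k) - K (y k) (f x)" for k
    define e where "e k = K (y k) (f x)" for k
    have dh: "norm (d k) \<le> norm (h k)" for k
      using chi3[of "y k" "a k" "f x"] hnn[of k] by (simp add: d_def h_def)
    have "(\<lambda>k. norm (h k)) summable_on UNIV" using hs hnn by simp
    then have dabs: "(\<lambda>k. norm (d k)) summable_on UNIV"
      using Infinite_Sum.abs_summable_on_comparison_test[of h UNIV d] dh by blast
    then have ds: "d summable_on UNIV" by (rule abs_summable_summable)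
    have "(\<lambda>k. norm (e k)) summable_on UNIV" using chi1[OF w, of x "f x"] by (simp add: e_def y_def)
    then have es: "e summable_on UNIV" by (rule abs_summable_summable)
    have S: "S_w K t w f x = (\<Sum>\<^sub>\<infinity>k. d k + e k)"
      unfolding S_w_def by (simp add: d_def e_def y_def a_def D_def)
    also have "\<dots> = (\<Sum>\<^sub>\<infinity>k. d k) + (\<Sum>\<^sub>\<infinity>k. e k)" by (rule infsum_add[OF ds es])
    finally have S2: "S_w K t w f x - f x = (\<Sum>\<^sub>\<infinity>k. d k) + ((\<Sum>\<^sub>\<infinity>k. e k) - f x)" by simp
    have "\<bar>\<Sum>\<^sub>\<infinity>k. d k\<bar> \<le> (\<Sum>\<^sub>\<infinity>k. norm (d k))"
      using norm_infsum_bound[OF dabs] by simp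
    also have "\<dots> \<le> (\<Sum>\<^sub>\<infinity>k. h k)"
      using dabs hs dh hnn by (intro infsum_mono) auto
    finally have d_le: "\<bar>\<Sum>\<^sub>\<infinity>k. d k\<bar> \<le> (\<Sum>\<^sub>\<infinity>k. h k)" .
    have e_le: "\<bar>(\<Sum>\<^sub>\<infinity>k. e k) - f x\<bar> \<le> M2 * w powr (- \<theta>0) * \<bar>f x\<bar>"
      unfolding e_def y_def by (rule T_bound_pt[OF chi2 T M2])
    have "\<bar>S_w K t w f x - f x\<bar> \<le> (\<Sum>\<^sub>\<infinity>k. h k) + M2 * w powr (- \<theta>0) * \<bar>f x\<bar>"
      unfolding S2 using d_le e_le by linarith
    then have "ennreal \<bar>S_w K t w f x - f x\<bar> \<le> ennreal ((\<Sum>\<^sub>\<infinity>k. h k) + M2 * w powr (- \<theta>0) * \<bar>f x\<bar>)"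
      by (rule ennreal_leI)
    also have "\<dots> = E + ennreal (M2 * w powr (- \<theta>0) * \<bar>f x\<bar>)"
      unfolding Eeq using M2 hnn by (subst ennreal_plus) (auto intro: infsum_nonneg)
    finally show ?thesis .
  qed
  also have "\<dots> \<le> JJ t L w (P1 t w f) x + JJ t L w (P2 t w f) x + ennreal (M2 * w powr (- \<theta>0) * \<bar>f x\<bar>)"
    using E_le by (rule add_right_mono)
  finally show ?thesis .
qed

lemma jensen_interval:
  fixes g :: "real \<Rightarrow> ennreal"
  assumes p: "1 \<le> p" and ab: "a < b" and g[measurable]: "g \<in> borel_measurable borel"
  shows "epow p (ennreal (1 / (b - a)) * (\<integral>\<^sup>+u. indicator {a..b} u * g u \<partial>lborel))
    \<le> ennreal (1 / (b - a)) * (\<integral>\<^sup>+u. indicator {a..b} u * epow p (g u) \<partial>lborel)"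
proof -
  define M where "M = density lborel (indicator {a..b})"
  have int: "(\<integral>\<^sup>+u. h u \<partial>M) = (\<integral>\<^sup>+u. indicator {a..b} u * h u \<partial>lborel)"
    if [measurable]: "h \<in> borel_measurable borel" for h :: "real \<Rightarrow> ennreal"
    unfolding M_def by (subst nn_integral_density) auto
  have sp: "emeasure M (space M) = ennreal (b - a)"
    unfolding M_def using ab by (simp add: emeasure_density nn_integral_indicator emeasure_lborel_Icc_eq)
  have gM: "g \<in> borel_measurable M" unfolding M_def by simp
  have J: "epow p (\<integral>\<^sup>+u. g u \<partial>M) \<le> epow (p - 1) (ennreal (b - a)) * (\<integral>\<^sup>+u. epow p (g u) \<partial>M)"
    using jensen_nn[OF p gM] sp by simp
  have c: "0 < 1 / (b - a)" using ab by simp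
  have "epow p (ennreal (1 / (b - a)) * (\<integral>\<^sup>+u. g u \<partial>M))
      = ennreal ((1 / (b - a)) powr p) * epow p (\<integral>\<^sup>+u. g u \<partial>M)"
    using p c by (simp add: epow_mult epow_ennreal)
  also have "\<dots> \<le> ennreal ((1 / (b - a)) powr p) * (epow (p - 1) (ennreal (b - a)) * (\<integral>\<^sup>+u. epow p (g u) \<partial>M))"
    using J by (rule mult_left_mono) simp
  also have "\<dots> = ennreal ((1 / (b - a)) powr p * (b - a) powr (p - 1)) * (\<integral>\<^sup>+u. epow p (g u) \<partial>M)"
    using ab by (simp add: epow_ennreal ennreal_mult mult.assoc)
  also have "(1 / (b - a)) powr p * (b - a) powr (p - 1) = 1 / (b - a)"
    using ab by (simp add: powr_divide powr_diff field_simps)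
  finally show ?thesis using int[of g] int[of "\<lambda>u. epow p (g u)"] by simp
qed

lemma jensen_count:
  fixes g :: "int \<Rightarrow> ennreal" and lam :: "int \<Rightarrow> real"
  assumes p: "1 \<le> p" and lam: "\<And>k. 0 \<le> lam k" and m: "0 \<le> m"
    and tot: "(\<integral>\<^sup>+k. ennreal (lam k) \<partial>count_space UNIV) \<le> ennreal m"
  shows "epow p (\<integral>\<^sup>+k. ennreal (lam k) * g k \<partial>count_space UNIV)
    \<le> ennreal (m powr (p - 1)) * (\<integral>\<^sup>+k. ennreal (lam k) * epow p (g k) \<partial>count_space UNIV)"
proof -
  define M where "M = density (count_space UNIV) (\<lambda>k. ennreal (lam k))"
  have int: "(\<integral>\<^sup>+k. h k \<partial>M) = (\<integral>\<^sup>+k. ennreal (lam k) * h k \<partial>count_space UNIV)" for h :: "int \<Rightarrow> ennreal"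
    unfolding M_def by (subst nn_integral_density) auto
  have sp: "emeasure M (space M) = (\<integral>\<^sup>+k. ennreal (lam k) \<partial>count_space UNIV)"
    unfolding M_def by (simp add: emeasure_density)
  have "epow p (\<integral>\<^sup>+k. g k \<partial>M) \<le> epow (p - 1) (emeasure M (space M)) * (\<integral>\<^sup>+k. epow p (g k) \<partial>M)"
    by (rule jensen_nn[OF p]) (simp add: M_def)
  also have "epow (p - 1) (emeasure M (space M)) \<le> epow (p - 1) (ennreal m)"
    unfolding sp using p tot by (intro epow_mono) auto
  also have "epow (p - 1) (ennreal m) = ennreal (m powr (p - 1))" using m by (simp add: epow_ennreal)
  finally show ?thesis unfolding int by (simp add: mult_right_mono)
qed

lemma JJ_epow:
  assumes p: "1 \<le> p" and samp: "sampling_seq t \<delta> \<Delta>" and w: "0 < w"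
    and L_nonneg: "\<And>x. 0 \<le> L x"
    and L1_bdd: "\<exists>r>0. \<exists>B. \<forall>x. \<bar>x\<bar> < r \<longrightarrow> L x \<le> B"
    and L2: "\<exists>\<beta>0>0. \<exists>B. \<forall>u. (\<lambda>k. L (u - t k) * \<bar>u - t k\<bar> powr \<beta>0) summable_on UNIV
                          \<and> (\<Sum>\<^sub>\<infinity>k. L (u - t k) * \<bar>u - t k\<bar> powr \<beta>0) \<le> B"
    and Pdef: "\<And>k. P k x = (\<integral>\<^sup>+u. indicator (Ik t w k) u * G k u \<partial>lborel)"
    and Gm: "\<And>k. G k \<in> borel_measurable borel"
  shows "epow p (JJ t L w P x) \<le> ennreal (m0 t L powr (p - 1) * (w / \<delta>)) *
    (\<integral>\<^sup>+k. ennreal (L (w * x - t k)) * (\<integral>\<^sup>+u. indicator (Ik t w k) u * epow p (G k u) \<partial>lborel) \<partial>count_space UNIV)"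
proof -
  have dpos: "0 < \<delta>" using samp by (simp add: sampling_seq_def)
  have m0: "0 \<le> m0 t L" by (rule m0_nonneg[OF samp L_nonneg L1_bdd L2])
  have tot: "(\<integral>\<^sup>+k. ennreal (L (w * x - t k)) \<partial>count_space UNIV) \<le> ennreal (m0 t L)"
    by (rule Lsum_le_m0[OF samp L_nonneg L1_bdd L2])
  have "epow p (JJ t L w P x) \<le> ennreal (m0 t L powr (p - 1)) *
     (\<integral>\<^sup>+k. ennreal (L (w * x - t k)) * epow p (ennreal (w / (t (k + 1) - t k)) * P k x) \<partial>count_space UNIV)"
    unfolding JJ_def by (rule jensen_count[OF p L_nonneg m0 tot])
  also have "\<dots> \<le> ennreal (m0 t L powr (p - 1)) *
     (\<integral>\<^sup>+k. ennreal (w / \<delta>) * (ennreal (L (w * x - t k)) * (\<integral>\<^sup>+u. indicator (Ik t w k) u * epow p (G k u) \<partial>lborel)) \<partial>count_space UNIV)"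
  proof (intro mult_left_mono nn_integral_mono)
    fix k
    have D: "t k < t (k + 1)" using samp_mono[OF samp] by (simp add: strict_mono_def)
    have ab: "t k / w < t (k + 1) / w" using D w by (simp add: divide_strict_right_mono)
    have eq: "1 / (t (k + 1) / w - t k / w) = w / (t (k + 1) - t k)"
      using w by (simp add: diff_divide_distrib[symmetric])
    have "epow p (ennreal (w / (t (k + 1) - t k)) * P k x)
       \<le> ennreal (w / (t (k + 1) - t k)) * (\<integral>\<^sup>+u. indicator (Ik t w k) u * epow p (G k u) \<partial>lborel)"
      using jensen_interval[OF p ab Gm[of k]] unfolding eq Pdef Ik_def .
    also have "\<dots> \<le> ennreal (w / \<delta>) * (\<integral>\<^sup>+u. indicator (Ik t w k) u * epow p (G k u) \<partial>lborel)"
    proof (intro mult_right_mono ennreal_leI)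
      show "w / (t (k + 1) - t k) \<le> w / \<delta>"
        using samp_gap[OF samp, of k] dpos w by (intro divide_left_mono) auto
    qed simp
    finally have "ennreal (L (w * x - t k)) * epow p (ennreal (w / (t (k + 1) - t k)) * P k x)
      \<le> ennreal (L (w * x - t k)) * (ennreal (w / \<delta>) * (\<integral>\<^sup>+u. indicator (Ik t w k) u * epow p (G k u) \<partial>lborel))"
      by (rule mult_left_mono) simp
    then show "ennreal (L (w * x - t k)) * epow p (ennreal (w / (t (k + 1) - t k)) * P k x)
      \<le> ennreal (w / \<delta>) * (ennreal (L (w * x - t k)) * (\<integral>\<^sup>+u. indicator (Ik t w k) u * epow p (G k u) \<partial>lborel))"
      by (simp add: mult.left_commute)
  qed simp
  also have "\<dots> = ennreal (m0 t L powr (p - 1) * (w / \<delta>)) *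
    (\<integral>\<^sup>+k. ennreal (L (w * x - t k)) * (\<integral>\<^sup>+u. indicator (Ik t w k) u * epow p (G k u) \<partial>lborel) \<partial>count_space UNIV)"
  proof -
    have "ennreal (m0 t L powr (p - 1) * (w / \<delta>)) = ennreal (m0 t L powr (p - 1)) * ennreal (w / \<delta>)"
      using w dpos by (intro ennreal_mult) auto
    then show ?thesis by (simp add: nn_integral_cmult mult.assoc)
  qed
  finally show ?thesis .
qed

lemma count_indicator_le1:
  assumes samp: "sampling_seq t \<delta> \<Delta>" and w: "0 < w" and u: "u \<notin> range (\<lambda>k. t k / w)"
  shows "(\<integral>\<^sup>+k. indicator (Ik t w k) u \<partial>count_space UNIV) \<le> 1"
proof -
  define N where "N = {k. u \<in> Ik t w k}"
  have ind: "(\<lambda>k. indicator (Ik t w k) u :: ennreal) = indicator N" by (auto simp: N_def indicator_def fun_eq_iff)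
  have strict: "t k < w * u \<and> w * u < t (k + 1)" if "k \<in> N" for k
  proof -
    have "t k / w \<le> u" "u \<le> t (k + 1) / w" using that by (auto simp: N_def Ik_def)
    moreover have "u \<noteq> t k / w" "u \<noteq> t (k + 1) / w" using u by auto
    ultimately have "t k / w < u" "u < t (k + 1) / w" by auto
    then show ?thesis using w by (auto simp: field_simps)
  qed
  have uniq: "j = k" if "j \<in> N" "k \<in> N" for j k
  proof (rule ccontr)
    assume "j \<noteq> k"
    then consider "j < k" | "k < j" by linarith
    then show False
    proof cases
      case 1
      then have "j + 1 \<le> k" by simp
      then have "t (j + 1) \<le> t k" using samp_mono[OF samp] by (simp add: strict_mono_less_eq)
      then show False using strict[OF that(1)] strict[OF that(2)] by linarith
    next
      case 2
      then have "k + 1 \<le> j" by simp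
      then have "t (k + 1) \<le> t j" using samp_mono[OF samp] by (simp add: strict_mono_less_eq)
      then show False using strict[OF that(1)] strict[OF that(2)] by linarith
    qed
  qed
  have "emeasure (count_space UNIV) N \<le> 1"
  proof (cases "N = {}")
    case False
    then obtain k0 where "k0 \<in> N" by blast
    then have "N = {k0}" using uniq by blast
    then show ?thesis by simp
  qed simp
  then show ?thesis unfolding ind by simp
qed

lemma JJ1_int:
  assumes p: "1 \<le> p" and samp: "sampling_seq t \<delta> \<Delta>" and w: "0 < w"
    and L_nonneg: "\<And>x. 0 \<le> L x"
    and L1_bdd: "\<exists>r>0. \<exists>B. \<forall>x. \<bar>x\<bar> < r \<longrightarrow> L x \<le> B"
    and L2: "\<exists>\<beta>0>0. \<exists>B. \<forall>u. (\<lambda>k. L (u - t k) * \<bar>u - t k\<bar> powr \<beta>0) summable_on UNIV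
                          \<and> (\<Sum>\<^sub>\<infinity>k. L (u - t k) * \<bar>u - t k\<bar> powr \<beta>0) \<le> B"
    and Lm[measurable]: "L \<in> borel_measurable borel" and fm[measurable]: "f \<in> borel_measurable borel"
    and Gint: "\<And>h. (\<integral>\<^sup>+u. ennreal (\<bar>f (u + h) - f u\<bar> powr p) \<partial>lborel) \<le> ennreal (Om h)"
  shows "(\<integral>\<^sup>+x. epow p (JJ t L w (P1 t w f) x) \<partial>lborel)
    \<le> ennreal (m0 t L powr (p - 1) / \<delta>) * (\<integral>\<^sup>+y. ennreal (L y) * ennreal (Om (y / w)) \<partial>lborel)"
proof -
  have dpos: "0 < \<delta>" using samp by (simp add: sampling_seq_def)
  have m0: "0 \<le> m0 t L" by (rule m0_nonneg[OF samp L_nonneg L1_bdd L2])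
  define H where "H u h = ennreal (\<bar>f u - f (u + h)\<bar> powr p)" for u h
  have Hm[measurable]: "(\<lambda>(u, h). H u h) \<in> borel_measurable (borel \<Otimes>\<^sub>M borel)"
    unfolding H_def by measurable
  define Q where "Q k x = (\<integral>\<^sup>+u. indicator (Ik t w k) u * H u (x - t k / w) \<partial>lborel)" for k x
  have Qm[measurable]: "Q k \<in> borel_measurable lborel" for k
    unfolding Q_def[abs_def] H_def Ik_def by measurable
  define R where "R x = (\<integral>\<^sup>+k. ennreal (L (w * x - t k)) * Q k x \<partial>count_space UNIV)" for x
  have Rm[measurable]: "R \<in> borel_measurable lborel"
    unfolding R_def[abs_def] by (intro meas_count_int) measurable
  define \<Phi> where "\<Phi> u = (\<integral>\<^sup>+y. ennreal (L y) * H u (y / w) \<partial>lborel)" for u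
  have \<Phi>m[measurable]: "\<Phi> \<in> borel_measurable lborel"
    unfolding \<Phi>_def[abs_def] H_def by measurable
  have pw: "epow p (JJ t L w (P1 t w f) x) \<le> ennreal (m0 t L powr (p - 1) * (w / \<delta>)) * R x" for x
  proof -
    have "epow p (JJ t L w (P1 t w f) x) \<le> ennreal (m0 t L powr (p - 1) * (w / \<delta>)) *
      (\<integral>\<^sup>+k. ennreal (L (w * x - t k)) * (\<integral>\<^sup>+u. indicator (Ik t w k) u *
         epow p (ennreal \<bar>f u - f (u + (x - t k / w))\<bar>) \<partial>lborel) \<partial>count_space UNIV)"
      by (rule JJ_epow[OF p samp w L_nonneg L1_bdd L2]) (auto simp: P1_def)
    also have "\<dots> = ennreal (m0 t L powr (p - 1) * (w / \<delta>)) * R x"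
      by (simp add: R_def Q_def H_def epow_ennreal)
    finally show ?thesis .
  qed
  have inner: "ennreal w * (\<integral>\<^sup>+x. ennreal (L (w * x - t k)) * H u (x - t k / w) \<partial>lborel) = \<Phi> u" for k u
  proof -
    have "\<Phi> u = ennreal \<bar>w\<bar> * (\<integral>\<^sup>+x. ennreal (L (- t k + w * x)) * H u ((- t k + w * x) / w) \<partial>lborel)"
      unfolding \<Phi>_def using w by (intro nn_integral_real_affine) (auto simp: H_def)
    also have "(\<lambda>x. ennreal (L (- t k + w * x)) * H u ((- t k + w * x) / w)) = (\<lambda>x. ennreal (L (w * x - t k)) * H u (x - t k / w))"
      using w by (auto simp: fun_eq_iff field_simps)
    finally show ?thesis using w by simp
  qed
  have perk: "ennreal w * (\<integral>\<^sup>+x. ennreal (L (w * x - t k)) * Q k x \<partial>lborel)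
      = (\<integral>\<^sup>+u. indicator (Ik t w k) u * \<Phi> u \<partial>lborel)" for k
  proof -
    have "(\<integral>\<^sup>+x. ennreal (L (w * x - t k)) * Q k x \<partial>lborel)
      = (\<integral>\<^sup>+x. \<integral>\<^sup>+u. ennreal (L (w * x - t k)) * (indicator (Ik t w k) u * H u (x - t k / w)) \<partial>lborel \<partial>lborel)"
      unfolding Q_def by (intro nn_integral_cong) (simp add: nn_integral_cmult Ik_def H_def)
    also have "\<dots> = (\<integral>\<^sup>+u. \<integral>\<^sup>+x. ennreal (L (w * x - t k)) * (indicator (Ik t w k) u * H u (x - t k / w)) \<partial>lborel \<partial>lborel)"
      by (rule lborel_pair.Fubini') (simp add: Ik_def H_def)
    also have "\<dots> = (\<integral>\<^sup>+u. indicator (Ik t w k) u * (\<integral>\<^sup>+x. ennreal (L (w * x - t k)) * H u (x - t k / w) \<partial>lborel) \<partial>lborel)"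
      by (intro nn_integral_cong) (simp add: nn_integral_cmult[symmetric] H_def mult.left_commute)
    finally have "ennreal w * (\<integral>\<^sup>+x. ennreal (L (w * x - t k)) * Q k x \<partial>lborel)
      = ennreal w * (\<integral>\<^sup>+u. indicator (Ik t w k) u * (\<integral>\<^sup>+x. ennreal (L (w * x - t k)) * H u (x - t k / w) \<partial>lborel) \<partial>lborel)"
      by simp
    also have "\<dots> = (\<integral>\<^sup>+u. indicator (Ik t w k) u * (ennreal w * (\<integral>\<^sup>+x. ennreal (L (w * x - t k)) * H u (x - t k / w) \<partial>lborel)) \<partial>lborel)"
      by (subst nn_integral_cmult[symmetric]) (auto simp: Ik_def H_def mult.left_commute)
    also have "\<dots> = (\<integral>\<^sup>+u. indicator (Ik t w k) u * \<Phi> u \<partial>lborel)" by (simp add: inner)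
    finally show ?thesis .
  qed
  have "ennreal w * (\<integral>\<^sup>+x. R x \<partial>lborel) = ennreal w * (\<integral>\<^sup>+k. \<integral>\<^sup>+x. ennreal (L (w * x - t k)) * Q k x \<partial>lborel \<partial>count_space UNIV)"
    unfolding R_def by (subst nn_integral_count_space_nn_integral) auto
  also have "\<dots> = (\<integral>\<^sup>+k. \<integral>\<^sup>+u. indicator (Ik t w k) u * \<Phi> u \<partial>lborel \<partial>count_space UNIV)"
    by (simp add: nn_integral_cmult[symmetric] perk)
  also have "\<dots> = (\<integral>\<^sup>+u. (\<integral>\<^sup>+k. indicator (Ik t w k) u \<partial>count_space UNIV) * \<Phi> u \<partial>lborel)"
    by (subst nn_integral_count_space_nn_integral[symmetric]) (auto simp: Ik_def nn_integral_multc)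
  also have "\<dots> \<le> (\<integral>\<^sup>+u. \<Phi> u \<partial>lborel)"
  proof (rule nn_integral_mono_AE)
    have "AE u in lborel. u \<notin> range (\<lambda>k. t k / w)"
      by (intro AE_not_in countable_imp_null_set_lborel) auto
    then show "AE u in lborel. (\<integral>\<^sup>+k. indicator (Ik t w k) u \<partial>count_space UNIV) * \<Phi> u \<le> \<Phi> u"
    proof eventually_elim
      case (elim u)
      have "(\<integral>\<^sup>+k. indicator (Ik t w k) u \<partial>count_space UNIV) \<le> 1" by (rule count_indicator_le1[OF samp w elim])
      then show ?case using mult_right_mono[of _ 1 "\<Phi> u"] by simp
    qed
  qed
  also have "\<dots> = (\<integral>\<^sup>+y. ennreal (L y) * (\<integral>\<^sup>+u. H u (y / w) \<partial>lborel) \<partial>lborel)"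
    unfolding \<Phi>_def
    by (subst lborel_pair.Fubini') (auto simp: nn_integral_cmult H_def)
  also have "\<dots> \<le> (\<integral>\<^sup>+y. ennreal (L y) * ennreal (Om (y / w)) \<partial>lborel)"
  proof (intro nn_integral_mono mult_left_mono)
    fix y
    have "(\<integral>\<^sup>+u. H u (y / w) \<partial>lborel) = (\<integral>\<^sup>+u. ennreal (\<bar>f (u + y / w) - f u\<bar> powr p) \<partial>lborel)"
      unfolding H_def by (simp add: abs_minus_commute)
    also have "\<dots> \<le> ennreal (Om (y / w))" by (rule Gint)
    finally show "(\<integral>\<^sup>+u. H u (y / w) \<partial>lborel) \<le> ennreal (Om (y / w))" .
  qed simp
  finally have Rint: "ennreal w * (\<integral>\<^sup>+x. R x \<partial>lborel) \<le> (\<integral>\<^sup>+y. ennreal (L y) * ennreal (Om (y / w)) \<partial>lborel)" .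
  have "(\<integral>\<^sup>+x. epow p (JJ t L w (P1 t w f) x) \<partial>lborel) \<le> (\<integral>\<^sup>+x. ennreal (m0 t L powr (p - 1) * (w / \<delta>)) * R x \<partial>lborel)"
    by (intro nn_integral_mono pw)
  also have "\<dots> = ennreal (m0 t L powr (p - 1) * (w / \<delta>)) * (\<integral>\<^sup>+x. R x \<partial>lborel)"
    by (simp add: nn_integral_cmult)
  also have "ennreal (m0 t L powr (p - 1) * (w / \<delta>)) = ennreal (m0 t L powr (p - 1) / \<delta>) * ennreal w"
    using w dpos by (simp add: ennreal_mult[symmetric])
  also have "\<dots> * (\<integral>\<^sup>+x. R x \<partial>lborel) = ennreal (m0 t L powr (p - 1) / \<delta>) * (ennreal w * (\<integral>\<^sup>+x. R x \<partial>lborel))"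
    by (simp add: mult.assoc)
  also have "\<dots> \<le> ennreal (m0 t L powr (p - 1) / \<delta>) * (\<integral>\<^sup>+y. ennreal (L y) * ennreal (Om (y / w)) \<partial>lborel)"
    using Rint by (rule mult_left_mono) simp
  finally show ?thesis .
qed

lemma JJ2_int:
  assumes p: "1 \<le> p" and samp: "sampling_seq t \<delta> \<Delta>" and w: "0 < w"
    and L_nonneg: "\<And>x. 0 \<le> L x"
    and L1_bdd: "\<exists>r>0. \<exists>B. \<forall>x. \<bar>x\<bar> < r \<longrightarrow> L x \<le> B"
    and L2: "\<exists>\<beta>0>0. \<exists>B. \<forall>u. (\<lambda>k. L (u - t k) * \<bar>u - t k\<bar> powr \<beta>0) summable_on UNIV
                          \<and> (\<Sum>\<^sub>\<infinity>k. L (u - t k) * \<bar>u - t k\<bar> powr \<beta>0) \<le> B"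
    and Lm[measurable]: "L \<in> borel_measurable borel" and fm[measurable]: "f \<in> borel_measurable borel"
    and c2: "0 \<le> c2" and Gint: "\<And>s. 0 \<le> s \<Longrightarrow> s \<le> \<Delta> / w \<Longrightarrow>
        (\<integral>\<^sup>+u. ennreal (\<bar>f (u + s) - f u\<bar> powr p) \<partial>lborel) \<le> ennreal c2"
  shows "(\<integral>\<^sup>+x. epow p (JJ t L w (P2 t w f) x) \<partial>lborel)
    \<le> ennreal (m0 t L powr (p - 1) * (w / \<delta>) * m0 t L * (\<Delta> / w) * c2)"
proof -
  have dpos: "0 < \<delta>" using samp by (simp add: sampling_seq_def)
  have Dd: "\<delta> \<le> \<Delta>" using samp_gap[OF samp, of 0] samp_gap2[OF samp, of 0] by simp
  have m0: "0 \<le> m0 t L" by (rule m0_nonneg[OF samp L_nonneg L1_bdd L2])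
  define C where "C = m0 t L powr (p - 1) * (w / \<delta>)"
  have C0: "0 \<le> C" using w dpos by (simp add: C_def)
  define \<Psi> where "\<Psi> x = (\<integral>\<^sup>+s. indicator {0..\<Delta> / w} s * ennreal (\<bar>f (x + s) - f x\<bar> powr p) \<partial>lborel)" for x
  have \<Psi>m[measurable]: "\<Psi> \<in> borel_measurable lborel" unfolding \<Psi>_def[abs_def] by measurable
  have pw: "epow p (JJ t L w (P2 t w f) x) \<le> ennreal C * (ennreal (m0 t L) * \<Psi> x)" for x
  proof -
    have "epow p (JJ t L w (P2 t w f) x) \<le> ennreal C *
      (\<integral>\<^sup>+k. ennreal (L (w * x - t k)) * (\<integral>\<^sup>+u. indicator (Ik t w k) u *
         epow p (ennreal \<bar>f (u + (x - t k / w)) - f x\<bar>) \<partial>lborel) \<partial>count_space UNIV)"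
      unfolding C_def by (rule JJ_epow[OF p samp w L_nonneg L1_bdd L2]) (auto simp: P2_def)
    also have "\<dots> \<le> ennreal C * (\<integral>\<^sup>+k. ennreal (L (w * x - t k)) * \<Psi> x \<partial>count_space UNIV)"
    proof (rule mult_left_mono, rule nn_integral_mono)
      fix k
      define a where "a = t k / w"
      define b where "b = t (k + 1) / w"
      have ba: "b - a \<le> \<Delta> / w"
        using samp_gap2[OF samp, of k] w by (simp add: a_def b_def diff_divide_distrib[symmetric] divide_right_mono)
      define F where "F s = indicator {0..b - a} s * ennreal (\<bar>f (x + s) - f x\<bar> powr p)" for s
      have Fm: "F \<in> borel_measurable borel" unfolding F_def[abs_def] by measurable
      have "(\<integral>\<^sup>+u. indicator (Ik t w k) u * epow p (ennreal \<bar>f (u + (x - t k / w)) - f x\<bar>) \<partial>lborel)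
          = (\<integral>\<^sup>+u. F (u + - a) \<partial>lborel)"
        by (intro nn_integral_cong) (auto simp: F_def Ik_def a_def b_def epow_ennreal indicator_def algebra_simps)
      also have "\<dots> = (\<integral>\<^sup>+s. F s \<partial>lborel)" by (rule nn_integral_shift[OF Fm])
      also have "\<dots> \<le> \<Psi> x"
        unfolding F_def \<Psi>_def using ba by (intro nn_integral_mono mult_right_mono) (auto simp: indicator_def)
      finally show "ennreal (L (w * x - t k)) * (\<integral>\<^sup>+u. indicator (Ik t w k) u *
         epow p (ennreal \<bar>f (u + (x - t k / w)) - f x\<bar>) \<partial>lborel) \<le> ennreal (L (w * x - t k)) * \<Psi> x"
        by (rule mult_left_mono) simp
    qed simp
    also have "\<dots> = ennreal C * ((\<integral>\<^sup>+k. ennreal (L (w * x - t k)) \<partial>count_space UNIV) * \<Psi> x)"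
      by (simp add: nn_integral_multc)
    also have "\<dots> \<le> ennreal C * (ennreal (m0 t L) * \<Psi> x)"
      using Lsum_le_m0[OF samp L_nonneg L1_bdd L2, of "w * x"]
      by (intro mult_left_mono mult_right_mono) auto
    finally show ?thesis .
  qed
  have "(\<integral>\<^sup>+x. \<Psi> x \<partial>lborel) = (\<integral>\<^sup>+s. indicator {0..\<Delta> / w} s * (\<integral>\<^sup>+x. ennreal (\<bar>f (x + s) - f x\<bar> powr p) \<partial>lborel) \<partial>lborel)"
    unfolding \<Psi>_def by (subst lborel_pair.Fubini') (auto simp: nn_integral_cmult)
  also have "\<dots> \<le> (\<integral>\<^sup>+s. indicator {0..\<Delta> / w} s * ennreal c2 \<partial>lborel)"
    by (intro nn_integral_mono) (auto simp: indicator_def Gint)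
  also have "\<dots> = ennreal c2 * ennreal (\<Delta> / w)"
    using dpos Dd w by (simp add: nn_integral_cmult_indicator mult.commute emeasure_lborel_Icc_eq)
  finally have Psi_int: "(\<integral>\<^sup>+x. \<Psi> x \<partial>lborel) \<le> ennreal c2 * ennreal (\<Delta> / w)" .
  have "(\<integral>\<^sup>+x. epow p (JJ t L w (P2 t w f) x) \<partial>lborel) \<le> (\<integral>\<^sup>+x. ennreal C * (ennreal (m0 t L) * \<Psi> x) \<partial>lborel)"
    by (intro nn_integral_mono pw)
  also have "\<dots> = ennreal C * ennreal (m0 t L) * (\<integral>\<^sup>+x. \<Psi> x \<partial>lborel)"
    by (simp add: nn_integral_cmult mult.assoc)
  also have "\<dots> \<le> ennreal C * ennreal (m0 t L) * (ennreal c2 * ennreal (\<Delta> / w))"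
    using Psi_int by (rule mult_left_mono) simp
  also have "\<dots> = ennreal (C * m0 t L * (\<Delta> / w) * c2)"
  proof -
    have Dw: "0 \<le> \<Delta> / w" using dpos Dd w by simp
    have "ennreal (C * m0 t L * (\<Delta> / w) * c2) = ennreal C * ennreal (m0 t L) * ennreal (\<Delta> / w) * ennreal c2"
      using C0 m0 c2 Dw by (metis ennreal_mult mult_nonneg_nonneg)
    then show ?thesis by (simp add: mult_ac)
  qed
  finally show ?thesis by (simp add: C_def)
qed

lemma omb_le:
  fixes p \<alpha> C1 \<epsilon> w y :: real
  assumes p: "1 \<le> p" and alpha: "0 < \<alpha>" "\<alpha> \<le> 1" and C1: "C1 > 0" and e: "\<epsilon> > 0"
    and w: "0 < w" "4 / \<epsilon> \<le> w"
  shows "Omb p \<alpha> C1 \<epsilon> (y / w) \<le> (C1 * w powr (- \<alpha>)) powr p * (1 + \<bar>y\<bar> powr p)"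
proof -
  define X where "X = C1 * w powr (- \<alpha>)"
  have X0: "0 < X" using C1 w by (simp add: X_def)
  have wa: "w powr (- \<alpha>) = 1 / w powr \<alpha>" using w by (simp add: powr_minus_divide)
  show ?thesis
  proof (cases "\<bar>y / w\<bar> < \<epsilon>")
    case True
    have "C1 * \<bar>y / w\<bar> powr \<alpha> = X * \<bar>y\<bar> powr \<alpha>"
      using w by (simp add: X_def wa abs_divide powr_divide)
    then have "Omb p \<alpha> C1 \<epsilon> (y / w) = (X * \<bar>y\<bar> powr \<alpha>) powr p"
      using True by (simp add: Omb_def)
    also have "\<dots> = X powr p * \<bar>y\<bar> powr (\<alpha> * p)"
      using X0 by (simp add: powr_mult powr_powr)
    also have "\<dots> \<le> X powr p * (1 + \<bar>y\<bar> powr p)"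
    proof (intro mult_left_mono)
      show "\<bar>y\<bar> powr (\<alpha> * p) \<le> 1 + \<bar>y\<bar> powr p"
      proof (cases "\<bar>y\<bar> \<le> 1")
        case True
        then have "\<bar>y\<bar> powr (\<alpha> * p) \<le> 1" using alpha p by (intro powr_le1) auto
        then show ?thesis by (smt (verit) powr_ge_zero)
      next
        case False
        then have "\<bar>y\<bar> powr (\<alpha> * p) \<le> \<bar>y\<bar> powr p"
          using alpha p by (intro powr_mono) (auto intro: mult_left_le_one_le)
        then show ?thesis by simp
      qed
    qed simp
    finally show ?thesis by (simp add: X_def)
  next
    case False
    have "(4 / \<epsilon>) powr (1 - \<alpha>) \<le> w powr (1 - \<alpha>)"
      using alpha e w by (intro powr_mono2) auto
    also have "w powr (1 - \<alpha>) = w * w powr (- \<alpha>)"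
      using powr_add[of w 1 "- \<alpha>"] w by simp
    finally have q: "(4 / \<epsilon>) powr (1 - \<alpha>) \<le> w * w powr (- \<alpha>)" .
    have "C1 * (4 / \<epsilon>) powr (1 - \<alpha>) * \<bar>y / w\<bar> = C1 * ((4 / \<epsilon>) powr (1 - \<alpha>) / w) * \<bar>y\<bar>"
      using w by (simp add: abs_divide)
    also have "\<dots> \<le> C1 * w powr (- \<alpha>) * \<bar>y\<bar>"
      using q w C1 by (intro mult_right_mono mult_left_mono) (auto simp: divide_le_eq mult.commute)
    finally have le: "C1 * (4 / \<epsilon>) powr (1 - \<alpha>) * \<bar>y / w\<bar> \<le> X * \<bar>y\<bar>" by (simp add: X_def)
    have "Omb p \<alpha> C1 \<epsilon> (y / w) = (C1 * (4 / \<epsilon>) powr (1 - \<alpha>) * \<bar>y / w\<bar>) powr p"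
      using False by (simp add: Omb_def)
    also have "\<dots> \<le> (X * \<bar>y\<bar>) powr p"
      using le p C1 by (intro powr_mono2) auto
    also have "\<dots> = X powr p * \<bar>y\<bar> powr p" using X0 by (simp add: powr_mult)
    also have "\<dots> \<le> X powr p * (1 + \<bar>y\<bar> powr p)" by (intro mult_left_mono) auto
    finally show ?thesis by (simp add: X_def)
  qed
qed

lemma Lomb_int:
  fixes p \<alpha> C1 \<epsilon> w :: real and L :: "real \<Rightarrow> real"
  assumes p: "1 \<le> p" and alpha: "0 < \<alpha>" "\<alpha> \<le> 1" and C1: "C1 > 0" and e: "\<epsilon> > 0"
    and w: "0 < w" "4 / \<epsilon> \<le> w"
    and L_nonneg: "\<And>x. 0 \<le> L x" and Lm[measurable]: "L \<in> borel_measurable borel"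
    and L1: "integrable lborel L" and Mp: "integrable lborel (\<lambda>u. L u * \<bar>u\<bar> powr p)"
  shows "(\<integral>\<^sup>+y. ennreal (L y) * ennreal (Omb p \<alpha> C1 \<epsilon> (y / w)) \<partial>lborel)
     \<le> ennreal ((C1 * w powr (- \<alpha>)) powr p * (integral\<^sup>L lborel L + integral\<^sup>L lborel (\<lambda>u. L u * \<bar>u\<bar> powr p)))"
proof -
  define X where "X = (C1 * w powr (- \<alpha>)) powr p"
  have X0: "0 \<le> X" by (simp add: X_def)
  have "(\<integral>\<^sup>+y. ennreal (L y) * ennreal (Omb p \<alpha> C1 \<epsilon> (y / w)) \<partial>lborel)
      \<le> (\<integral>\<^sup>+y. ennreal X * (ennreal (L y) + ennreal (L y * \<bar>y\<bar> powr p)) \<partial>lborel)"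
  proof (intro nn_integral_mono)
    fix y
    have "L y * Omb p \<alpha> C1 \<epsilon> (y / w) \<le> L y * (X * (1 + \<bar>y\<bar> powr p))"
      using omb_le[OF p alpha C1 e w, of y] L_nonneg[of y] by (intro mult_left_mono) (auto simp: X_def)
    then have "ennreal (L y * Omb p \<alpha> C1 \<epsilon> (y / w)) \<le> ennreal (X * (L y + L y * \<bar>y\<bar> powr p))"
      by (intro ennreal_leI) (simp add: algebra_simps)
    then show "ennreal (L y) * ennreal (Omb p \<alpha> C1 \<epsilon> (y / w)) \<le> ennreal X * (ennreal (L y) + ennreal (L y * \<bar>y\<bar> powr p))"
      using L_nonneg[of y] X0 by (simp add: ennreal_mult ennreal_plus Omb_def)
  qed
  also have "\<dots> = ennreal X * ((\<integral>\<^sup>+y. ennreal (L y) \<partial>lborel) + (\<integral>\<^sup>+y. ennreal (L y * \<bar>y\<bar> powr p) \<partial>lborel))"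
    by (simp add: nn_integral_cmult nn_integral_add)
  also have "(\<integral>\<^sup>+y. ennreal (L y) \<partial>lborel) = ennreal (integral\<^sup>L lborel L)"
    using L1 L_nonneg by (intro nn_integral_eq_integral) auto
  also have "(\<integral>\<^sup>+y. ennreal (L y * \<bar>y\<bar> powr p) \<partial>lborel) = ennreal (integral\<^sup>L lborel (\<lambda>u. L u * \<bar>u\<bar> powr p))"
    using Mp L_nonneg by (intro nn_integral_eq_integral) auto
  also have "ennreal X * (ennreal (integral\<^sup>L lborel L) + ennreal (integral\<^sup>L lborel (\<lambda>u. L u * \<bar>u\<bar> powr p)))
      = ennreal (X * (integral\<^sup>L lborel L + integral\<^sup>L lborel (\<lambda>u. L u * \<bar>u\<bar> powr p)))"
    using X0 L_nonneg by (simp add: ennreal_mult ennreal_plus integral_nonneg_AE)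
  finally show ?thesis by (simp add: X_def)
qed

lemma J3_int:
  assumes p: "1 \<le> p" and fLp: "in_Lp p f" and c: "0 \<le> c"
  shows "(\<integral>\<^sup>+x. epow p (ennreal (c * \<bar>f x\<bar>)) \<partial>lborel) \<le> ennreal ((c * enn2real (Lp_norm p f)) powr p)"
proof -
  have fm[measurable]: "f \<in> borel_measurable borel" using fLp by (simp add: in_Lp_def)
  have ip: "integrable lborel (\<lambda>x. \<bar>f x\<bar> powr p)" using fLp by (simp add: in_Lp_def)
  define N where "N = integral\<^sup>L lborel (\<lambda>x. \<bar>f x\<bar> powr p)"
  have N0: "0 \<le> N" unfolding N_def by (intro integral_nonneg_AE) auto
  have I: "(\<integral>\<^sup>+x. ennreal (\<bar>f x\<bar> powr p) \<partial>lborel) = ennreal N"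
    unfolding N_def using ip by (intro nn_integral_eq_integral) auto
  have Lp: "enn2real (Lp_norm p f) = N powr (1 / p)"
    unfolding Lp_norm_def Let_def I using N0 by simp
  have "(\<integral>\<^sup>+x. epow p (ennreal (c * \<bar>f x\<bar>)) \<partial>lborel) = (\<integral>\<^sup>+x. ennreal (c powr p) * ennreal (\<bar>f x\<bar> powr p) \<partial>lborel)"
  proof (intro nn_integral_cong)
    fix x
    have "epow p (ennreal (c * \<bar>f x\<bar>)) = ennreal ((c * \<bar>f x\<bar>) powr p)"
      using c by (intro epow_ennreal) simp
    also have "\<dots> = ennreal (c powr p) * ennreal (\<bar>f x\<bar> powr p)"
      using c by (simp add: powr_mult ennreal_mult)
    finally show "epow p (ennreal (c * \<bar>f x\<bar>)) = ennreal (c powr p) * ennreal (\<bar>f x\<bar> powr p)" .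
  qed
  also have "\<dots> = ennreal (c powr p) * ennreal N" by (simp add: nn_integral_cmult I)
  also have "\<dots> = ennreal ((c * enn2real (Lp_norm p f)) powr p)"
    unfolding Lp using c N0 p by (simp add: powr_mult powr_powr ennreal_mult)
  finally show ?thesis by simp
qed

lemma powr_mult5:
  fixes a b c d e p :: real
  assumes "0 \<le> a" "0 \<le> b" "0 \<le> c" "0 \<le> d" "0 \<le> e"
  shows "(a * b * c * d * e) powr p = a powr p * b powr p * c powr p * d powr p * e powr p"
  using assms by (simp add: powr_mult)

lemma B1_arith:
  fixes p \<delta> m Qv C1 w \<alpha> :: real
  assumes p: "1 \<le> p" and d: "0 < \<delta>" and m: "0 \<le> m" and Q: "0 \<le> Qv" and C1: "0 < C1" and w: "0 < w"
  shows "m powr (p - 1) / \<delta> * ((C1 * w powr (- \<alpha>)) powr p * Qv)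
    \<le> (\<delta> powr (- 1 / p) * (2 * m) powr ((p - 1) / p) * Qv powr (1 / p) * C1 * (1 / w powr \<alpha>)) powr p"
proof -
  have e1: "(\<delta> powr (- 1 / p)) powr p = 1 / \<delta>"
  proof -
    have "(\<delta> powr (- 1 / p)) powr p = \<delta> powr (- 1 / p * p)" by (rule powr_powr)
    also have "- 1 / p * p = - 1" using p by simp
    finally show ?thesis using d by (simp add: powr_minus_divide)
  qed
  have e2: "((2 * m) powr ((p - 1) / p)) powr p = (2 * m) powr (p - 1)" using p by (simp add: powr_powr)
  have e3: "(Qv powr (1 / p)) powr p = Qv" using Q p by (cases "Qv = 0") (auto simp: powr_powr)
  have e4: "(1 / w powr \<alpha>) powr p = (w powr (- \<alpha>)) powr p" using w by (simp add: powr_minus_divide)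
  have "(\<delta> powr (- 1 / p) * (2 * m) powr ((p - 1) / p) * Qv powr (1 / p) * C1 * (1 / w powr \<alpha>)) powr p
     = (\<delta> powr (- 1 / p)) powr p * ((2 * m) powr ((p - 1) / p)) powr p * (Qv powr (1 / p)) powr p
        * C1 powr p * (1 / w powr \<alpha>) powr p"
    using C1 w m by (intro powr_mult5) auto
  also have "\<dots> = 1 / \<delta> * (2 * m) powr (p - 1) * Qv * C1 powr p * (w powr (- \<alpha>)) powr p"
    unfolding e1 e2 e3 e4 ..
  finally have R: "(\<delta> powr (- 1 / p) * (2 * m) powr ((p - 1) / p) * Qv powr (1 / p) * C1 * (1 / w powr \<alpha>)) powr p
     = 1 / \<delta> * (2 * m) powr (p - 1) * Qv * C1 powr p * (w powr (- \<alpha>)) powr p" .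
  have "m powr (p - 1) \<le> (2 * m) powr (p - 1)" using m p by (intro powr_mono2) auto
  then have "m powr (p - 1) / \<delta> * ((C1 * w powr (- \<alpha>)) powr p * Qv)
     \<le> (2 * m) powr (p - 1) / \<delta> * ((C1 * w powr (- \<alpha>)) powr p * Qv)"
    using d Q by (intro mult_right_mono divide_right_mono) auto
  also have "\<dots> = 1 / \<delta> * (2 * m) powr (p - 1) * Qv * C1 powr p * (w powr (- \<alpha>)) powr p"
    using C1 w by (simp add: powr_mult)
  finally show ?thesis unfolding R .
qed

lemma B2_arith:
  fixes p \<delta> m C1 w \<alpha> \<Delta> :: real
  assumes p: "1 \<le> p" and d: "0 < \<delta>" and m: "0 \<le> m" and C1: "0 < C1" and w: "0 < w" and D: "0 < \<Delta>"
  shows "m powr (p - 1) * (w / \<delta>) * m * (\<Delta> / w) * (C1 * (\<Delta> / w) powr \<alpha>) powr p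
    \<le> (\<delta> powr (- 1 / p) * m * C1 * \<Delta> powr (1 / p) * (\<Delta> / w) powr \<alpha>) powr p"
proof -
  have e1: "(\<delta> powr (- 1 / p)) powr p = 1 / \<delta>"
  proof -
    have "(\<delta> powr (- 1 / p)) powr p = \<delta> powr (- 1 / p * p)" by (rule powr_powr)
    also have "- 1 / p * p = - 1" using p by simp
    finally show ?thesis using d by (simp add: powr_minus_divide)
  qed
  have e3: "(\<Delta> powr (1 / p)) powr p = \<Delta>" using D p by (simp add: powr_powr)
  have "(\<delta> powr (- 1 / p) * m * C1 * \<Delta> powr (1 / p) * (\<Delta> / w) powr \<alpha>) powr p
    = (\<delta> powr (- 1 / p)) powr p * m powr p * C1 powr p * (\<Delta> powr (1 / p)) powr p * ((\<Delta> / w) powr \<alpha>) powr p"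
    using m C1 D w by (intro powr_mult5) auto
  also have "\<dots> = 1 / \<delta> * m powr p * C1 powr p * \<Delta> * ((\<Delta> / w) powr \<alpha>) powr p"
    unfolding e1 e3 ..
  finally have R: "(\<delta> powr (- 1 / p) * m * C1 * \<Delta> powr (1 / p) * (\<Delta> / w) powr \<alpha>) powr p
    = 1 / \<delta> * m powr p * C1 powr p * \<Delta> * ((\<Delta> / w) powr \<alpha>) powr p" .
  have "m powr (p - 1) * (w / \<delta>) * m * (\<Delta> / w) * (C1 * (\<Delta> / w) powr \<alpha>) powr p
     = (m powr (p - 1) * m) * (w / \<delta> * (\<Delta> / w)) * (C1 powr p * ((\<Delta> / w) powr \<alpha>) powr p)"
    using C1 by (simp add: powr_mult mult_ac)
  also have "\<dots> = 1 / \<delta> * m powr p * C1 powr p * \<Delta> * ((\<Delta> / w) powr \<alpha>) powr p"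
    using powr_pm1_mult[OF m, of p] w d by (simp add: field_simps)
  finally show ?thesis unfolding R by simp
qed

theorem corollary3p3:
  fixes p \<delta> \<Delta> M2 \<theta>0 \<alpha> C1 :: real
    and t :: "int \<Rightarrow> real"
    and K :: "real \<Rightarrow> real \<Rightarrow> real"
    and L f :: "real \<Rightarrow> real"
  assumes p: "1 \<le> p"
    and samp: "sampling_seq t \<delta> \<Delta>"
    and chi1: "\<And>x u w. w > 0 \<Longrightarrow> (\<lambda>k. \<bar>K (w * x - t k) u\<bar>) summable_on UNIV"
    and chi2: "\<And>x. K x 0 = 0"
    and L_meas: "L \<in> borel_measurable lborel"
    and L_nonneg: "\<And>x. 0 \<le> L x"
    and chi3: "\<And>x u v. \<bar>K x u - K x v\<bar> \<le> L x * \<bar>u - v\<bar>"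
    and L1_int: "integrable lborel L"
    and L1_bdd: "\<exists>r>0. \<exists>B. \<forall>x. \<bar>x\<bar> < r \<longrightarrow> L x \<le> B"
    and L2: "\<exists>\<beta>0>0. \<exists>B. \<forall>u. (\<lambda>k. L (u - t k) * \<bar>u - t k\<bar> powr \<beta>0) summable_on UNIV
                          \<and> (\<Sum>\<^sub>\<infinity>k. L (u - t k) * \<bar>u - t k\<bar> powr \<beta>0) \<le> B"
    and Mp: "integrable lborel (\<lambda>u. L u * \<bar>u\<bar> powr p)"
    and M2: "M2 > 0" and th0: "\<theta>0 > 0"
    and chi4: "\<forall>\<^sub>F w in at_top. \<forall>x. T_w K t w x \<le> ennreal (M2 * w powr (- \<theta>0))"
    and alpha: "0 < \<alpha>" "\<alpha> \<le> 1"
    and C1: "C1 > 0"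
    and f: "Lip_with \<alpha> p C1 f"
  shows "\<forall>\<^sub>F w in at_top.
     Lp_norm p (\<lambda>x. S_w K t w f x - f x) \<le> ennreal
       (\<delta> powr (- 1 / p) * (2 * m0 t L) powr ((p - 1) / p)
          * ((integral\<^sup>L lborel L) + (integral\<^sup>L lborel (\<lambda>u. L u * \<bar>u\<bar> powr p))) powr (1 / p)
          * C1 * (1 / w powr \<alpha>)
        + \<delta> powr (- 1 / p) * m0 t L * C1 * \<Delta> powr (1 / p) * (\<Delta> / w) powr \<alpha>
        + M2 * enn2real (Lp_norm p f) * w powr (- \<theta>0))"
proof -
  have fLp: "in_Lp p f" using f by (simp add: Lip_with_def)
  have fm[measurable]: "f \<in> borel_measurable borel" using fLp by (simp add: in_Lp_def)
  have Lm[measurable]: "L \<in> borel_measurable borel" using L_meas by simp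
  have dpos: "0 < \<delta>" using samp by (simp add: sampling_seq_def)
  have Dd: "\<delta> \<le> \<Delta>" using samp_gap[OF samp, of 0] samp_gap2[OF samp, of 0] by simp
  have Dpos: "0 < \<Delta>" using dpos Dd by simp
  have m0: "0 \<le> m0 t L" by (rule m0_nonneg[OF samp L_nonneg L1_bdd L2])
  define Qv where "Qv = integral\<^sup>L lborel L + integral\<^sup>L lborel (\<lambda>u. L u * \<bar>u\<bar> powr p)"
  have Qv0: "0 \<le> Qv" unfolding Qv_def using L_nonneg
    by (intro add_nonneg_nonneg integral_nonneg_AE) auto
  obtain \<epsilon> where e: "\<epsilon> > 0"
    and esmall: "\<And>h. \<bar>h\<bar> < \<epsilon> \<Longrightarrow>
      (\<integral>\<^sup>+u. ennreal (\<bar>f (u + h) - f u\<bar> powr p) \<partial>lborel) \<le> ennreal ((C1 * \<bar>h\<bar> powr \<alpha>) powr p)"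
    and eglob: "\<And>h. (\<integral>\<^sup>+u. ennreal (\<bar>f (u + h) - f u\<bar> powr p) \<partial>lborel) \<le> ennreal (Omb p \<alpha> C1 \<epsilon> h)"
    using shift_global[OF p alpha C1 f] by blast
  have ev: "\<forall>\<^sub>F w in at_top. (0 < w \<and> 4 / \<epsilon> \<le> w \<and> \<Delta> / \<epsilon> < w) \<and> (\<forall>x. T_w K t w x \<le> ennreal (M2 * w powr (- \<theta>0)))"
    using eventually_gt_at_top[of 0] eventually_ge_at_top[of "4 / \<epsilon>"] eventually_gt_at_top[of "\<Delta> / \<epsilon>"] chi4
    by eventually_elim auto
  show ?thesis using ev
  proof (rule eventually_mono)
    fix w assume H: "(0 < w \<and> 4 / \<epsilon> \<le> w \<and> \<Delta> / \<epsilon> < w) \<and> (\<forall>x. T_w K t w x \<le> ennreal (M2 * w powr (- \<theta>0)))"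
    then have w: "0 < w" and w4: "4 / \<epsilon> \<le> w" and wD: "\<Delta> / \<epsilon> < w"
      and T: "\<And>x. T_w K t w x \<le> ennreal (M2 * w powr (- \<theta>0))" by auto
    have Dwe: "\<Delta> / w < \<epsilon>" using wD w e by (simp add: field_simps)
    define B1 where "B1 = \<delta> powr (- 1 / p) * (2 * m0 t L) powr ((p - 1) / p) * Qv powr (1 / p) * C1 * (1 / w powr \<alpha>)"
    define B2 where "B2 = \<delta> powr (- 1 / p) * m0 t L * C1 * \<Delta> powr (1 / p) * (\<Delta> / w) powr \<alpha>"
    define c3 where "c3 = M2 * w powr (- \<theta>0)"
    define B3 where "B3 = c3 * enn2real (Lp_norm p f)"
    have B1_0: "0 \<le> B1" unfolding B1_def using C1 w by simp
    have B2_0: "0 \<le> B2" unfolding B2_def using C1 m0 by simp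
    have c3_0: "0 \<le> c3" unfolding c3_def using M2 by simp
    have B3_0: "0 \<le> B3" unfolding B3_def using c3_0 by simp
    define J1 where "J1 = JJ t L w (P1 t w f)"
    define J2 where "J2 = JJ t L w (P2 t w f)"
    define J3 where "J3 x = ennreal (c3 * \<bar>f x\<bar>)" for x
    have J1m[measurable]: "J1 \<in> borel_measurable lborel" unfolding J1_def by (intro JJ_meas) auto
    have J2m[measurable]: "J2 \<in> borel_measurable lborel" unfolding J2_def by (intro JJ_meas) auto
    have J3m[measurable]: "J3 \<in> borel_measurable lborel" unfolding J3_def[abs_def] by measurable
    have I1: "(\<integral>\<^sup>+x. epow p (J1 x) \<partial>lborel) \<le> ennreal (B1 powr p)"
    proof -
      have "(\<integral>\<^sup>+x. epow p (J1 x) \<partial>lborel)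
          \<le> ennreal (m0 t L powr (p - 1) / \<delta>) * (\<integral>\<^sup>+y. ennreal (L y) * ennreal (Omb p \<alpha> C1 \<epsilon> (y / w)) \<partial>lborel)"
        unfolding J1_def by (rule JJ1_int[OF p samp w L_nonneg L1_bdd L2 Lm fm eglob])
      also have "\<dots> \<le> ennreal (m0 t L powr (p - 1) / \<delta>) * ennreal ((C1 * w powr (- \<alpha>)) powr p * Qv)"
        unfolding Qv_def by (intro mult_left_mono Lomb_int[OF p alpha C1 e w w4 L_nonneg Lm L1_int Mp]) simp
      also have "\<dots> = ennreal (m0 t L powr (p - 1) / \<delta> * ((C1 * w powr (- \<alpha>)) powr p * Qv))"
        using dpos Qv0 by (intro ennreal_mult[symmetric]) auto
      also have "\<dots> \<le> ennreal (B1 powr p)"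
        unfolding B1_def by (intro ennreal_leI B1_arith[OF p dpos m0 Qv0 C1 w])
      finally show ?thesis .
    qed
    have I2: "(\<integral>\<^sup>+x. epow p (J2 x) \<partial>lborel) \<le> ennreal (B2 powr p)"
    proof -
      have "(\<integral>\<^sup>+x. epow p (J2 x) \<partial>lborel)
          \<le> ennreal (m0 t L powr (p - 1) * (w / \<delta>) * m0 t L * (\<Delta> / w) * (C1 * (\<Delta> / w) powr \<alpha>) powr p)"
        unfolding J2_def
      proof (rule JJ2_int[OF p samp w L_nonneg L1_bdd L2 Lm fm])
        fix s assume s: "0 \<le> s" "s \<le> \<Delta> / w"
        have "(\<integral>\<^sup>+u. ennreal (\<bar>f (u + s) - f u\<bar> powr p) \<partial>lborel) \<le> ennreal ((C1 * \<bar>s\<bar> powr \<alpha>) powr p)"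
          using s Dwe by (intro esmall) auto
        also have "\<dots> \<le> ennreal ((C1 * (\<Delta> / w) powr \<alpha>) powr p)"
          using s C1 alpha p by (intro ennreal_leI powr_mono2 mult_left_mono) auto
        finally show "(\<integral>\<^sup>+u. ennreal (\<bar>f (u + s) - f u\<bar> powr p) \<partial>lborel) \<le> ennreal ((C1 * (\<Delta> / w) powr \<alpha>) powr p)" .
      qed simp
      also have "\<dots> \<le> ennreal (B2 powr p)"
        unfolding B2_def by (intro ennreal_leI B2_arith[OF p dpos m0 C1 w Dpos])
      finally show ?thesis .
    qed
    have I3: "(\<integral>\<^sup>+x. epow p (J3 x) \<partial>lborel) \<le> ennreal (B3 powr p)"
      unfolding J3_def B3_def by (rule J3_int[OF p fLp c3_0])
    have mk: "(\<integral>\<^sup>+x. epow p (J1 x + J2 x + J3 x) \<partial>lborel) \<le> ennreal ((B1 + B2 + B3) powr p)"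
      by (rule mink3[OF p J1m J2m J3m B1_0 I1 B2_0 I2 B3_0 I3])
    define g where "g x = S_w K t w f x - f x" for x
    have pw: "ennreal (\<bar>g x\<bar> powr p) \<le> epow p (J1 x + J2 x + J3 x)" for x
    proof -
      have "ennreal \<bar>g x\<bar> \<le> J1 x + J2 x + J3 x"
        unfolding g_def J1_def J2_def J3_def c3_def
        by (rule pointwise_main[OF p fLp w samp chi1 chi2 chi3 L_nonneg T less_imp_le[OF M2]])
      then have "epow p (ennreal \<bar>g x\<bar>) \<le> epow p (J1 x + J2 x + J3 x)" using p by (intro epow_mono) auto
      then show ?thesis by (simp add: epow_ennreal)
    qed
    define I where "I = (\<integral>\<^sup>+x. ennreal (\<bar>g x\<bar> powr p) \<partial>lborel)"
    have IB: "I \<le> ennreal ((B1 + B2 + B3) powr p)"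
      unfolding I_def using order_trans[OF nn_integral_mono[OF pw] mk] .
    define B where "B = B1 + B2 + B3"
    have B0: "0 \<le> B" using B1_0 B2_0 B3_0 by (simp add: B_def)
    have "I \<noteq> top" using IB by (auto simp: top_unique B_def)
    then obtain ir where ir: "I = ennreal ir" "0 \<le> ir" by (cases I rule: ennreal_cases) auto
    have "ir \<le> B powr p" using IB ir by (simp add: B_def ennreal_le_iff)
    then have "ir powr (1 / p) \<le> (B powr p) powr (1 / p)" using p ir by (intro powr_mono2) auto
    also have "(B powr p) powr (1 / p) = B" using p B0 by (cases "B = 0") (auto simp: powr_powr)
    finally have "Lp_norm p g \<le> ennreal B"
      unfolding Lp_norm_def Let_def I_def[symmetric] using ir by (simp add: ennreal_leI)
    then show "Lp_norm p (\<lambda>x. S_w K t w f x - f x) \<le> ennreal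
       (\<delta> powr (- 1 / p) * (2 * m0 t L) powr ((p - 1) / p)
          * ((integral\<^sup>L lborel L) + (integral\<^sup>L lborel (\<lambda>u. L u * \<bar>u\<bar> powr p))) powr (1 / p)
          * C1 * (1 / w powr \<alpha>)
        + \<delta> powr (- 1 / p) * m0 t L * C1 * \<Delta> powr (1 / p) * (\<Delta> / w) powr \<alpha>
        + M2 * enn2real (Lp_norm p f) * w powr (- \<theta>0))"
      unfolding g_def[abs_def] B_def B1_def B2_def B3_def c3_def Qv_def by (simp add: mult_ac)
  qed
qed

end
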